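(* Let $N\subset\Gamma$ be a sublattice of signature $(1,r)$ whose orthogonal complement $N^\perp\subset\Gamma$ contains a hyperbolic plane $U'$. Then $N^\perp=N^\vee\oplus U'$ for a sublattice $N^\vee$ of signature $(1,18-r)$. Put $\Gamma'=U'^\perp$, so that $\Gamma=\Gamma'\oplus U'$ and $\Gamma'_{\mathbb R}=V\oplus V^\vee$ with $V=N_{\mathbb R}$ and $V^\vee=N^\vee_{\mathbb R}$. For a subspace $W\subset\Gamma_{\mathbb R}$ set $$\overline{\mathcal T}(W):=\{((P,\omega),B)\in \mathrm{Gr}^{\rm po}_{2,1}(\Gamma_{\mathbb R})\times\Gamma_{\mathbb R}: \omega,B\in W,\ P\subset W^\perp\}.$$ Then the mirror map $\tilde\xi$ associated with the splitting $\Gamma=\Gamma'\oplus U'$ maps $\gamma(\overline{\mathcal T}(V))$ bijectively onto $\gamma(\overline{\mathcal T}(V^\vee))$. That is, it induces a bijection $\overline{\mathcal T}(V)\cong\overline{\mathcal T}(V^\vee)$.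
   Context: $\Gamma=2(-E_8)\oplus3U$ is the K3 lattice (even, unimodular, signature $(3,19)$). $U$ is the hyperbolic plane with standard basis $(w,w^* )$ ($w^2={w^*}^2=0$, $\langle w,w^*\rangle=1$). An isometry $U'\cong U$ is fixed, and $(v,v^* )$ is the basis of $U'$ corresponding to $(w,w^* )$. $\mathrm{Gr}^{\rm po}_{2,1}(\Gamma_{\mathbb R})=\{(P,\omega): P$ an oriented positive definite plane in $\Gamma_{\mathbb R}$, $\omega\in P^\perp$, $\omega^2>0\}$. The map $\gamma$ sends $((P,\omega),B)$ to the pair $(H_1,H_2)$ of orthogonal oriented positive planes in $\Gamma_{\mathbb R}\oplus U_{\mathbb R}$ given by: - $H_1=\{x-\langle x,B\rangle w: x\in P\}$, oriented via $P$; - $H_2$ with ordered basis $\big(\tfrac12(\omega^2-B^2)w+w^*+B,\ \omega-\langle\omega,B\rangle w\big)$. $\xi\in \mathrm O(\Gamma\oplus U)$ is the identity on $\Gamma'$ and swaps $v\leftrightarrow w$, $v^*\leftrightarrow w^*$. $\iota(H_1,H_2)=(H_2,H_1)$, and $\tilde\xi=\iota\circ\xi$ acts on pairs of planes (isometries acting componentwise with transported orientations). *)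

theory Defs
  imports "HOL-Analysis.Analysis"
begin

text \<open>Edges of the E8 Dynkin diagram (Bourbaki labelling, 0-indexed).\<close>
definition e8edge :: "nat \<Rightarrow> nat \<Rightarrow> bool" where
  "e8edge i j \<longleftrightarrow> (i, j) \<in> {(0,2),(1,3),(2,3),(3,4),(4,5),(5,6),(6,7)}"

definition mE8 :: "nat \<Rightarrow> nat \<Rightarrow> int" where
  "mE8 i j = (if i = j then -2 else if e8edge i j \<or> e8edge j i then 1 else 0)"

text \<open>Gram matrix of the K3 lattice 2(-E8) + 3U on indices 0..21.\<close>
definition K3gram :: "nat \<Rightarrow> nat \<Rightarrow> int" where
  "K3gram i j =
    (if i < 8 \<and> j < 8 then mE8 i j
     else if 8 \<le> i \<and> i < 16 \<and> 8 \<le> j \<and> j < 16 then mE8 (i - 8) (j - 8)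
     else if 16 \<le> i \<and> i < 22 \<and> 16 \<le> j \<and> j < 22 \<and> i \<noteq> j
             \<and> (i - 16) div 2 = (j - 16) div 2 then 1
     else 0)"

definition bf :: "real^'n^'n \<Rightarrow> real^'n \<Rightarrow> real^'n \<Rightarrow> real" where
  "bf Q x y = x \<bullet> (Q *v y)"

definition latt :: "(real^'n) set" where
  "latt = {x. \<forall>i. x $ i \<in> \<int>}"

definition sublattice :: "(real^'n) set \<Rightarrow> bool" where
  "sublattice N \<longleftrightarrow> N \<subseteq> latt \<and> 0 \<in> N \<and> (\<forall>x\<in>N. \<forall>y\<in>N. x + y \<in> N \<and> x - y \<in> N)"

definition posdef_sub :: "real^'n^'n \<Rightarrow> (real^'n) set \<Rightarrow> bool" where
  "posdef_sub Q S \<longleftrightarrow> subspace S \<and> (\<forall>x\<in>S. x \<noteq> 0 \<longrightarrow> bf Q x x > 0)"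

definition negdef_sub :: "real^'n^'n \<Rightarrow> (real^'n) set \<Rightarrow> bool" where
  "negdef_sub Q S \<longleftrightarrow> subspace S \<and> (\<forall>x\<in>S. x \<noteq> 0 \<longrightarrow> bf Q x x < 0)"

text \<open>A real subspace W has (nondegenerate) signature (p,q): dim W = p+q and W contains
  a positive definite subspace of dim p and a negative definite subspace of dim q
  (by Sylvester's law this is equivalent to the usual definition).\<close>
definition has_signature :: "real^'n^'n \<Rightarrow> (real^'n) set \<Rightarrow> nat \<Rightarrow> nat \<Rightarrow> bool" where
  "has_signature Q W p q \<longleftrightarrow> subspace W \<and> dim W = p + q \<and>
     (\<exists>S \<subseteq> W. posdef_sub Q S \<and> dim S = p) \<and> (\<exists>S \<subseteq> W. negdef_sub Q S \<and> dim S = q)"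

definition lattice_signature :: "real^'n^'n \<Rightarrow> (real^'n) set \<Rightarrow> nat \<Rightarrow> nat \<Rightarrow> bool" where
  "lattice_signature Q N p q \<longleftrightarrow> has_signature Q (span N) p q"

definition orth_latt :: "real^'n^'n \<Rightarrow> (real^'n) set \<Rightarrow> (real^'n) set" where
  "orth_latt Q N = {x \<in> latt. \<forall>y\<in>N. bf Q x y = 0}"

definition orth_real :: "real^'n^'n \<Rightarrow> (real^'n) set \<Rightarrow> (real^'n) set" where
  "orth_real Q W = {x. \<forall>y\<in>W. bf Q x y = 0}"

text \<open>The oriented plane with oriented basis (x,y), as the set of all positively
  oriented ordered bases of span{x,y}.\<close>
definition oclass :: "'v::real_vector \<Rightarrow> 'v \<Rightarrow> ('v \<times> 'v) set" where
  "oclass x y = {(a *\<^sub>R x + b *\<^sub>R y, c *\<^sub>R x + d *\<^sub>R y) | a b c d. a * d - b * c > 0}"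

definition plane_span :: "('v::real_vector \<times> 'v) set \<Rightarrow> 'v set" where
  "plane_span P = span (fst ` P)"

definition pmap :: "('v \<Rightarrow> 'w) \<Rightarrow> ('v \<times> 'v) set \<Rightarrow> ('w \<times> 'w) set" where
  "pmap f P = (\<lambda>(p, q). (f p, f q)) ` P"

definition grpo :: "real^'n^'n \<Rightarrow> ((((real^'n) \<times> (real^'n)) set) \<times> (real^'n)) set" where
  "grpo Q = {(P, \<omega>). \<exists>x y. P = oclass x y \<and>
      (\<forall>a b. a *\<^sub>R x + b *\<^sub>R y = 0 \<longrightarrow> a = 0 \<and> b = 0) \<and>
      (\<forall>z\<in>span {x, y}. z \<noteq> 0 \<longrightarrow> bf Q z z > 0) \<and>
      (\<forall>z\<in>span {x, y}. bf Q z \<omega> = 0) \<and> bf Q \<omega> \<omega> > 0}"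

text \<open>An element (x, a, b) of real^'n \<times> real \<times> real stands for x + a w + b w*.\<close>
type_synonym 'n ext = "(real^'n) \<times> real \<times> real"

definition gammaH1 :: "real^'n^'n \<Rightarrow> real^'n \<Rightarrow> real^'n \<Rightarrow> 'n ext" where
  "gammaH1 Q B x = (x, - bf Q x B, 0)"

definition gamma_map :: "real^'n^'n \<Rightarrow> ((((real^'n) \<times> (real^'n)) set \<times> (real^'n)) \<times> (real^'n))
     \<Rightarrow> ('n ext \<times> 'n ext) set \<times> ('n ext \<times> 'n ext) set" where
  "gamma_map Q = (\<lambda>((P, \<omega>), B).
     (pmap (gammaH1 Q B) P,
      oclass (B, (bf Q \<omega> \<omega> - bf Q B B) / 2, 1) (\<omega>, - bf Q \<omega> B, 0)))"

text \<open>xi: identity on \<Gamma>' = U'^perp, swaps v <-> w and v* <-> w*.\<close>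
definition xi :: "real^'n^'n \<Rightarrow> real^'n \<Rightarrow> real^'n \<Rightarrow> 'n ext \<Rightarrow> 'n ext" where
  "xi Q v vs = (\<lambda>(x, a, b).
     (x - bf Q x vs *\<^sub>R v - bf Q x v *\<^sub>R vs + a *\<^sub>R v + b *\<^sub>R vs, bf Q x vs, bf Q x v))"

definition xi_tilde :: "real^'n^'n \<Rightarrow> real^'n \<Rightarrow> real^'n \<Rightarrow>
     ('n ext \<times> 'n ext) set \<times> ('n ext \<times> 'n ext) set \<Rightarrow>
     ('n ext \<times> 'n ext) set \<times> ('n ext \<times> 'n ext) set" where
  "xi_tilde Q v vs = (\<lambda>(H1, H2). (pmap (xi Q v vs) H2, pmap (xi Q v vs) H1))"

definition Tbar :: "real^'n^'n \<Rightarrow> (real^'n) set \<Rightarrow>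
     ((((real^'n) \<times> (real^'n)) set \<times> (real^'n)) \<times> (real^'n)) set" where
  "Tbar Q W = {((P, \<omega>), B). (P, \<omega>) \<in> grpo Q \<and> \<omega> \<in> W \<and> B \<in> W \<and> plane_span P \<subseteq> orth_real Q W}"

end

theory Submission
  imports Defs
begin




lemma bf_add_left: "bf Q (x + y) z = bf Q x z + bf Q y z" by (simp add: bf_def inner_add_left)
lemma bf_add_right: "bf Q z (x + y) = bf Q z x + bf Q z y" by (simp add: bf_def inner_add_right matrix_vector_right_distrib)
lemma bf_diff_left: "bf Q (x - y) z = bf Q x z - bf Q y z" by (simp add: bf_def inner_diff_left)
lemma bf_diff_right: "bf Q z (x - y) = bf Q z x - bf Q z y" by (simp add: bf_def inner_diff_right matrix_vector_mult_diff_distrib)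
lemma bf_scale_left: "bf Q (c *\<^sub>R x) z = c * bf Q x z" by (simp add: bf_def)
lemma bf_scale_right: "bf Q z (c *\<^sub>R x) = c * bf Q z x" by (simp add: bf_def matrix_vector_mult_scaleR)
lemma bf_zero_left: "bf Q 0 z = 0" by (simp add: bf_def)
lemma bf_zero_right: "bf Q z 0 = 0" by (simp add: bf_def)
lemma bf_neg_left: "bf Q (- x) z = - bf Q x z" by (simp add: bf_def)
lemma bf_neg_right: "bf Q z (- x) = - bf Q z x" using bf_scale_right[of Q z "-1" x] by simp
lemmas bf_simps = bf_add_left bf_add_right bf_diff_left bf_diff_right bf_scale_left bf_scale_right
  bf_zero_left bf_zero_right bf_neg_left bf_neg_right

lemma bf_sym: assumes "transpose Q = Q" shows "bf Q x y = bf Q y x"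
proof -
  have "bf Q x y = (x v* Q) \<bullet> y" by (simp add: bf_def dot_lmul_matrix)
  also have "x v* Q = Q *v x" using vector_transpose_matrix[of x Q] assms by simp
  finally show ?thesis by (simp add: bf_def inner_commute)
qed

lemma bf_uminusQ: "bf (- Q) x y = - bf Q x y"
  by (simp add: bf_def matrix_vector_mult_def inner_vec_def sum_negf vec_eq_iff)



lemma span2: "z \<in> span {a, b} \<longleftrightarrow> (\<exists>s t. z = s *\<^sub>R a + t *\<^sub>R b)"
proof
  assume "z \<in> span {a, b}"
  then obtain k where "z - k *\<^sub>R a \<in> range (\<lambda>k. k *\<^sub>R b)"
    unfolding span_breakdown_eq span_singleton by blast
  then obtain t where "z - k *\<^sub>R a = t *\<^sub>R b" by auto
  then show "\<exists>s t. z = s *\<^sub>R a + t *\<^sub>R b" by (metis diff_eq_eq add.commute)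
next
  assume "\<exists>s t. z = s *\<^sub>R a + t *\<^sub>R b"
  then obtain s t where "z = s *\<^sub>R a + t *\<^sub>R b" by blast
  then show "z \<in> span {a, b}"
    by (simp add: span_add span_base span_scale)
qed

lemma span1: "z \<in> span {a} \<longleftrightarrow> (\<exists>s. z = s *\<^sub>R a)"
  unfolding span_singleton by auto

lemma int_nonzero:
  fixes A B W :: "('a::euclidean_space) set"
  assumes "subspace A" "subspace B" "subspace W" "A \<subseteq> W" "B \<subseteq> W" "dim A + dim B > dim W"
  shows "\<exists>z. z \<in> A \<and> z \<in> B \<and> z \<noteq> 0"
proof (rule ccontr)
  assume "\<not> ?thesis"
  then have "A \<inter> B \<subseteq> {0}" by auto
  then have "dim (A \<inter> B) \<le> dim {0::'a}" by (rule dim_subset)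
  then have d0: "dim (A \<inter> B) = 0" by simp
  have "{x + y |x y. x \<in> A \<and> y \<in> B} \<subseteq> W"
    using assms subspace_add by blast
  then have "dim {x + y |x y. x \<in> A \<and> y \<in> B} \<le> dim W" by (rule dim_subset)
  with dim_sums_Int[OF assms(1,2)] d0 assms(6) show False by linarith
qed



lemma UB:
  assumes "posdef_sub Q S" "negdef_sub Q T" "subspace W" "S \<subseteq> W" "T \<subseteq> W"
  shows "dim S + dim T \<le> dim W"
proof (rule ccontr)
  assume "\<not> ?thesis"
  then obtain z where "z \<in> S" "z \<in> T" "z \<noteq> 0"
    using int_nonzero[of S T W] assms unfolding posdef_sub_def negdef_sub_def by force
  then show False using assms unfolding posdef_sub_def negdef_sub_def by force
qed

lemma neg_pos: "negdef_sub Q S \<longleftrightarrow> posdef_sub (- Q) S"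
  unfolding negdef_sub_def posdef_sub_def bf_uminusQ by auto

lemma posdef_zero: "posdef_sub Q {0}"
  by (simp add: posdef_sub_def subspace_single_0)



lemma possum:
  assumes sym: "\<And>x y. bf Q x y = bf Q y x"
    and "posdef_sub Q S1" "posdef_sub Q S2" "\<And>x y. x \<in> S1 \<Longrightarrow> y \<in> S2 \<Longrightarrow> bf Q x y = 0"
  shows "posdef_sub Q {x + y |x y. x \<in> S1 \<and> y \<in> S2} \<and> dim {x + y |x y. x \<in> S1 \<and> y \<in> S2} = dim S1 + dim S2"
proof -
  have s1: "subspace S1" and s2: "subspace S2" using assms unfolding posdef_sub_def by auto
  have p1: "\<And>x. x \<in> S1 \<Longrightarrow> bf Q x x \<ge> 0"
    using assms(2) unfolding posdef_sub_def by (metis bf_zero_left order_refl less_imp_le)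
  have p2: "\<And>x. x \<in> S2 \<Longrightarrow> bf Q x x \<ge> 0"
    using assms(3) unfolding posdef_sub_def by (metis bf_zero_left order_refl less_imp_le)
  have sq: "bf Q (x + y) (x + y) = bf Q x x + bf Q y y" if "x \<in> S1" "y \<in> S2" for x y
    using assms(4)[OF that] sym[of x y] by (simp add: bf_simps)
  have pd: "posdef_sub Q {x + y |x y. x \<in> S1 \<and> y \<in> S2}"
    unfolding posdef_sub_def
  proof (intro conjI ballI impI)
    show "subspace {x + y |x y. x \<in> S1 \<and> y \<in> S2}" using subspace_sums[OF s1 s2] .
    fix z assume "z \<in> {x + y |x y. x \<in> S1 \<and> y \<in> S2}" "z \<noteq> 0"
    then obtain x y where xy: "z = x + y" "x \<in> S1" "y \<in> S2" by auto
    show "bf Q z z > 0"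
    proof (cases "x = 0")
      case True
      then have "y \<noteq> 0" using xy \<open>z \<noteq> 0\<close> by auto
      then show ?thesis using xy sq p1 assms(3) unfolding posdef_sub_def by fastforce
    next
      case False
      then show ?thesis using xy sq p2 assms(2) unfolding posdef_sub_def
        by (metis add_pos_nonneg)
    qed
  qed
  have "S1 \<inter> S2 \<subseteq> {0}"
  proof
    fix z assume "z \<in> S1 \<inter> S2"
    then have "bf Q z z = 0" using assms(4) by auto
    then show "z \<in> {0}" using \<open>z \<in> S1 \<inter> S2\<close> assms(2) unfolding posdef_sub_def by force
  qed
  then have "dim (S1 \<inter> S2) \<le> dim {0::real^'a}" by (rule dim_subset)
  then have "dim (S1 \<inter> S2) = 0" by simp
  with dim_sums_Int[OF s1 s2] pd show ?thesis by linarith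
qed

lemma negsum:
  assumes sym: "\<And>x y. bf Q x y = bf Q y x"
    and "negdef_sub Q S1" "negdef_sub Q S2" "\<And>x y. x \<in> S1 \<Longrightarrow> y \<in> S2 \<Longrightarrow> bf Q x y = 0"
  shows "negdef_sub Q {x + y |x y. x \<in> S1 \<and> y \<in> S2} \<and> dim {x + y |x y. x \<in> S1 \<and> y \<in> S2} = dim S1 + dim S2"
  using possum[of "-Q" S1 S2] assms unfolding neg_pos bf_uminusQ by auto



lemma pos_line:
  assumes "bf Q x x > 0"
  shows "posdef_sub Q (span {x}) \<and> dim (span {x}) = 1"
proof -
  have "x \<noteq> 0" using assms by (auto simp: bf_simps)
  moreover have "posdef_sub Q (span {x})"
    unfolding posdef_sub_def
  proof (intro conjI ballI impI)
    fix z assume "z \<in> span {x}" "z \<noteq> 0"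
    then obtain s where "z = s *\<^sub>R x" "s \<noteq> 0" using span1 by force
    then show "bf Q z z > 0" using assms by (simp add: bf_simps mult.assoc[symmetric]) (metis mult_pos_pos not_real_square_gt_zero)
  qed simp
  ultimately show ?thesis by simp
qed

lemma neg_line:
  assumes "bf Q x x < 0"
  shows "negdef_sub Q (span {x}) \<and> dim (span {x}) = 1"
  using pos_line[of "-Q" x] assms unfolding neg_pos bf_uminusQ by auto



lemma ND:
  assumes sym: "\<And>x y. bf Q x y = bf Q y x"
    and W: "subspace W" and S: "posdef_sub Q S" "S \<subseteq> W" and T: "negdef_sub Q T" "T \<subseteq> W"
    and d: "dim S + dim T \<ge> dim W"
    and x: "x \<in> W" "\<And>y. y \<in> W \<Longrightarrow> bf Q x y = 0"
  shows "x = 0"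
proof (rule ccontr)
  assume "x \<noteq> 0"
  have sS: "subspace S" using S unfolding posdef_sub_def by auto
  have sT: "subspace T" using T unfolding negdef_sub_def by auto
  have xx: "bf Q x x = 0" using x by auto
  have "S \<inter> span {x} \<subseteq> {0}"
  proof
    fix z assume z: "z \<in> S \<inter> span {x}"
    then obtain s where "z = s *\<^sub>R x" using span1 by force
    then have "bf Q z z = 0" using xx by (simp add: bf_simps)
    then show "z \<in> {0}" using z S unfolding posdef_sub_def by force
  qed
  then have "dim (S \<inter> span {x}) \<le> dim {0::real^'a}" by (rule dim_subset)
  then have "dim (S \<inter> span {x}) = 0" by simp
  moreover have "dim (span {x}) = 1" using \<open>x \<noteq> 0\<close> by simp
  ultimately have dS': "dim {a + b |a b. a \<in> S \<and> b \<in> span {x}} = dim S + 1"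
    using dim_sums_Int[OF sS subspace_span[of "{x}"]] by linarith
  have sub: "{a + b |a b. a \<in> S \<and> b \<in> span {x}} \<subseteq> W"
  proof
    fix z assume "z \<in> {a + b |a b. a \<in> S \<and> b \<in> span {x}}"
    then obtain a b where ab: "z = a + b" "a \<in> S" "b \<in> span {x}" by blast
    then obtain s where "b = s *\<^sub>R x" unfolding span1 by blast
    then have "b \<in> W" using W x(1) subspace_scale by blast
    moreover have "a \<in> W" using ab S(2) by blast
    ultimately show "z \<in> W" using ab W subspace_add by blast
  qed
  have ss: "subspace {a + b |a b. a \<in> S \<and> b \<in> span {x}}"
    using subspace_sums[OF sS subspace_span[of "{x}"]] .
  have "dim {a + b |a b. a \<in> S \<and> b \<in> span {x}} + dim T > dim W" using dS' d by linarith
  from int_nonzero[OF ss sT W sub T(2) this]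
  obtain z where z: "z \<in> {a + b |a b. a \<in> S \<and> b \<in> span {x}}" "z \<in> T" "z \<noteq> 0"
    by blast
  then obtain a b where ab: "z = a + b" "a \<in> S" "b \<in> span {x}" by blast
  then obtain c where "b = c *\<^sub>R x" unfolding span1 by blast
  with ab have ac: "z = a + c *\<^sub>R x" "a \<in> S" by auto
  have "a \<in> W" using ac S by blast
  then have "bf Q x a = 0" using x by blast
  then have "bf Q z z = bf Q a a" using ac xx sym[of a x] by (simp add: bf_simps)
  moreover have "bf Q a a \<ge> 0"
  proof (cases "a = 0")
    case True then show ?thesis by (simp add: bf_simps)
  next
    case False then show ?thesis using ac S unfolding posdef_sub_def by (simp add: less_imp_le)
  qed
  moreover have "bf Q z z < 0" using z T unfolding negdef_sub_def by blast
  ultimately show False by linarith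
qed




lemma subspace_bf_kernel: "subspace {y. bf Q x y = 0}"
  unfolding subspace_def by (simp add: bf_simps)

lemma diag:
  assumes sym: "\<And>x y. bf Q x y = bf Q y x"
  shows "subspace W \<Longrightarrow> \<exists>S T R. posdef_sub Q S \<and> negdef_sub Q T \<and> S \<subseteq> W \<and> T \<subseteq> W \<and> subspace R \<and> R \<subseteq> W
     \<and> (\<forall>r\<in>R. \<forall>y\<in>W. bf Q r y = 0) \<and> dim W \<le> dim S + dim T + dim R"
proof (induct "dim W" arbitrary: W rule: less_induct)
  case less
  note W = less.prems
  show ?case
  proof (cases "\<forall>x\<in>W. bf Q x x = 0")
    case True
    have rad: "\<forall>r\<in>W. \<forall>y\<in>W. bf Q r y = 0"
    proof (intro ballI)
      fix r y assume "r \<in> W" "y \<in> W"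
      then have "r + y \<in> W" using W subspace_add by blast
      then have "bf Q (r + y) (r + y) = 0" using True by blast
      moreover have "bf Q r r = 0" "bf Q y y = 0" using True \<open>r \<in> W\<close> \<open>y \<in> W\<close> by auto
      ultimately show "bf Q r y = 0" using sym[of r y] by (simp add: bf_simps)
    qed
    have "negdef_sub Q {0}" unfolding neg_pos by (rule posdef_zero)
    moreover have "{0} \<subseteq> W" using W subspace_0 by blast
    ultimately show ?thesis using posdef_zero rad W by (intro exI[of _ "{0}"] exI[of _ W]) auto
  next
    case False
    then obtain x where x: "x \<in> W" "bf Q x x \<noteq> 0" by blast
    define W' where "W' = W \<inter> {y. bf Q x y = 0}"
    have sW': "subspace W'" unfolding W'_def by (rule subspace_inter[OF W subspace_bf_kernel])
    have W'W: "W' \<subseteq> W" unfolding W'_def by blast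
    have "x \<notin> W'" using x unfolding W'_def by auto
    then have "span W' \<subset> span W" using W'W x W sW' by (metis psubsetI span_eq_iff)
    then have dlt: "dim W' < dim W" by (rule dim_psubset)
    from less.hyps[OF dlt sW'] obtain S' T' R' where
      IH: "posdef_sub Q S'" "negdef_sub Q T'" "S' \<subseteq> W'" "T' \<subseteq> W'" "subspace R'" "R' \<subseteq> W'"
        "\<forall>r\<in>R'. \<forall>y\<in>W'. bf Q r y = 0" "dim W' \<le> dim S' + dim T' + dim R'"
      by blast
    have decomp: "W \<subseteq> {a + b |a b. a \<in> W' \<and> b \<in> span {x}}"
    proof
      fix y assume y: "y \<in> W"
      define c where "c = bf Q x y / bf Q x x"
      have "y - c *\<^sub>R x \<in> W" using y x W subspace_diff subspace_scale by blast
      moreover have "bf Q x (y - c *\<^sub>R x) = 0" using x(2) by (simp add: bf_simps c_def)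
      ultimately have "y - c *\<^sub>R x \<in> W'" unfolding W'_def by blast
      moreover have "c *\<^sub>R x \<in> span {x}" by (simp add: span_base span_scale)
      ultimately show "y \<in> {a + b |a b. a \<in> W' \<and> b \<in> span {x}}"
        by (metis (mono_tags, lifting) diff_add_cancel mem_Collect_eq)
    qed
    have "dim W \<le> dim {a + b |a b. a \<in> W' \<and> b \<in> span {x}}" using decomp by (rule dim_subset)
    moreover have "dim {a + b |a b. a \<in> W' \<and> b \<in> span {x}} \<le> dim W' + 1"
      using dim_sums_Int[OF sW' subspace_span[of "{x}"]] dim_singleton[of x] by (simp split: if_splits)
    ultimately have dW: "dim W \<le> dim W' + 1" by linarith
    have R'W: "\<forall>r\<in>R'. \<forall>y\<in>W. bf Q r y = 0"
    proof (intro ballI)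
      fix r y assume r: "r \<in> R'" and y: "y \<in> W"
      then obtain a b where ab: "y = a + b" "a \<in> W'" "b \<in> span {x}" using decomp by blast
      then obtain c where "b = c *\<^sub>R x" unfolding span1 by blast
      moreover have "bf Q r a = 0" using IH(7) r ab by blast
      moreover have "bf Q r x = 0" using sym[of r x] r IH(6) unfolding W'_def by auto
      ultimately show "bf Q r y = 0" using ab by (simp add: bf_simps)
    qed
    have orthx: "bf Q a b = 0" if ha: "a \<in> W'" and hb: "b \<in> span {x}" for a b
    proof -
      obtain c where "b = c *\<^sub>R x" using hb unfolding span1 by blast
      then show ?thesis using ha sym[of a x] unfolding W'_def by (simp add: bf_simps)
    qed
    have sumW: "{a + b |a b. a \<in> A \<and> b \<in> span {x}} \<subseteq> W" if hA: "A \<subseteq> W" for A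
    proof
      fix z assume "z \<in> {a + b |a b. a \<in> A \<and> b \<in> span {x}}"
      then obtain a b where ab: "z = a + b" "a \<in> A" "b \<in> span {x}" by blast
      then obtain c where "b = c *\<^sub>R x" unfolding span1 by blast
      then have "b \<in> W" using W x(1) subspace_scale by blast
      then show "z \<in> W" using ab hA W subspace_add by blast
    qed
    show ?thesis
    proof (cases "bf Q x x > 0")
      case True
      from pos_line[OF True] have pl: "posdef_sub Q (span {x})" "dim (span {x}) = 1" by auto
      have "posdef_sub Q {a + b |a b. a \<in> S' \<and> b \<in> span {x}} \<and> dim {a + b |a b. a \<in> S' \<and> b \<in> span {x}} = dim S' + dim (span {x})"
        by (rule possum[OF sym IH(1) pl(1)]) (use orthx IH(3) in blast)
      moreover have "{a + b |a b. a \<in> S' \<and> b \<in> span {x}} \<subseteq> W" using sumW IH(3) W'W by blast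
      ultimately show ?thesis using IH R'W dW pl W'W
        by (intro exI[of _ "{a + b |a b. a \<in> S' \<and> b \<in> span {x}}"] exI[of _ T'] exI[of _ R']) auto
    next
      case False
      then have neg: "bf Q x x < 0" using x(2) by linarith
      from neg_line[OF neg] have pl: "negdef_sub Q (span {x})" "dim (span {x}) = 1" by auto
      have "negdef_sub Q {a + b |a b. a \<in> T' \<and> b \<in> span {x}} \<and> dim {a + b |a b. a \<in> T' \<and> b \<in> span {x}} = dim T' + dim (span {x})"
        by (rule negsum[OF sym IH(2) pl(1)]) (use orthx IH(4) in blast)
      moreover have "{a + b |a b. a \<in> T' \<and> b \<in> span {x}} \<subseteq> W" using sumW IH(4) W'W by blast
      ultimately show ?thesis using IH R'W dW pl W'W
        by (intro exI[of _ S'] exI[of _ "{a + b |a b. a \<in> T' \<and> b \<in> span {x}}"] exI[of _ R']) auto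
    qed
  qed
qed

lemma sig_ND:
  assumes sym: "\<And>x y. bf Q x y = bf Q y x"
    and "has_signature Q W p q" "x \<in> W" "\<And>y. y \<in> W \<Longrightarrow> bf Q x y = 0"
  shows "x = 0"
proof -
  obtain S T where "posdef_sub Q S" "S \<subseteq> W" "dim S = p" "negdef_sub Q T" "T \<subseteq> W" "dim T = q"
    "subspace W" "dim W = p + q"
    using assms(2) unfolding has_signature_def by blast
  then show ?thesis using ND[OF sym, of W S T x] assms(3,4) by auto
qed

lemma noPos2:
  assumes sym: "\<And>x y. bf Q x y = bf Q y x"
    and sig: "has_signature Q W 1 q" and p: "p1 \<in> W" "p2 \<in> W"
  shows "\<not> (\<forall>a b. (a \<noteq> 0 \<or> b \<noteq> 0) \<longrightarrow> bf Q (a *\<^sub>R p1 + b *\<^sub>R p2) (a *\<^sub>R p1 + b *\<^sub>R p2) > 0)"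
proof
  assume H: "\<forall>a b. (a \<noteq> 0 \<or> b \<noteq> 0) \<longrightarrow> bf Q (a *\<^sub>R p1 + b *\<^sub>R p2) (a *\<^sub>R p1 + b *\<^sub>R p2) > 0"
  have nz: "a *\<^sub>R p1 + b *\<^sub>R p2 \<noteq> 0" if "a \<noteq> 0 \<or> b \<noteq> 0" for a b
    using H that by (metis bf_zero_left less_irrefl)
  have pd: "posdef_sub Q (span {p1, p2})"
    unfolding posdef_sub_def
  proof (intro conjI ballI impI)
    fix z assume "z \<in> span {p1, p2}" "z \<noteq> 0"
    then obtain s t where st: "z = s *\<^sub>R p1 + t *\<^sub>R p2" unfolding span2 by blast
    then have "s \<noteq> 0 \<or> t \<noteq> 0" using \<open>z \<noteq> 0\<close> by auto
    then show "bf Q z z > 0" using H st by blast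
  qed simp
  have "p1 \<noteq> p2" using nz[of 1 "-1"] by auto
  have "p1 \<noteq> 0" using nz[of 1 0] by auto
  have "p2 \<notin> span {p1}"
  proof
    assume "p2 \<in> span {p1}"
    then obtain k where "p2 = k *\<^sub>R p1" unfolding span1 by blast
    then show False using nz[of "-k" 1] by auto
  qed
  then have "independent {p2, p1}" using \<open>p1 \<noteq> 0\<close> by (simp add: independent_insert)
  then have "dim (span {p1, p2}) = 2" using \<open>p1 \<noteq> p2\<close> dim_span_eq_card_independent
    by (metis card_2_iff insert_commute)
  obtain T where T: "negdef_sub Q T" "T \<subseteq> W" "dim T = q" "subspace W" "dim W = 1 + q"
    using sig unfolding has_signature_def by blast
  have "span {p1, p2} \<subseteq> W" using p T(4) by (simp add: span_minimal)
  from UB[OF pd T(1) T(4) this T(2)] show False using \<open>dim (span {p1, p2}) = 2\<close> T by linarith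
qed



lemma plane_alg:
  fixes g11 g12 g22 tx ty :: real
  assumes pd: "\<And>a b. (a \<noteq> 0 \<or> b \<noteq> 0) \<Longrightarrow> a*a*g11 + 2*a*b*g12 + b*b*g22 > 0"
    and t: "tx \<noteq> 0 \<or> ty \<noteq> 0"
  shows "\<exists>m11 m12 m21 m22. m11*tx + m12*ty = 1 \<and> m21*tx + m22*ty = 0 \<and>
     m11*m21*g11 + (m11*m22 + m12*m21)*g12 + m12*m22*g22 = 0 \<and>
     m11*m11*g11 + 2*m11*m12*g12 + m12*m12*g22 = m21*m21*g11 + 2*m21*m22*g12 + m22*m22*g22 \<and>
     m11*m22 - m12*m21 > 0"
proof -
  define G where "G = (\<lambda>a b c d. a*c*g11 + (a*d+b*c)*g12 + b*d*g22 :: real)"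
  have Gsq: "G a b a b = a*a*g11 + 2*a*b*g12 + b*b*g22" for a b unfolding G_def by (simp add: algebra_simps)
  define T where "T = tx*tx + ty*ty"
  have T: "T > 0" using t unfolding T_def by (simp add: sum_squares_gt_zero_iff)
  define Gw where "Gw = G ty (-tx) ty (-tx)"
  have Gw: "Gw > 0" unfolding Gw_def Gsq using pd[of ty "-tx"] t by (simp, blast)
  define k where "k = - G (tx/T) (ty/T) ty (-tx) / Gw"
  define p where "p = tx/T + k*ty"
  define q where "q = ty/T - k*tx"
  have "p*tx + q*ty = (tx*tx + ty*ty)/T" unfolding p_def q_def by (simp add: algebra_simps add_divide_distrib)
  then have pq1: "p*tx + q*ty = 1" using T t unfolding T_def by simp
  have "p \<noteq> 0 \<or> q \<noteq> 0" using pq1 by auto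
  then have Gz: "G p q p q > 0" unfolding Gsq using pd by blast
  define l where "l = - sqrt (G p q p q / Gw)"
  have l2: "l*l = G p q p q / Gw" unfolding l_def using Gz Gw by simp
  have orth0: "G p q ty (-tx) = 0"
  proof -
    have "G p q ty (-tx) = G (tx/T) (ty/T) ty (-tx) + k * Gw"
      unfolding p_def q_def Gw_def G_def by (simp add: algebra_simps)
    also have "\<dots> = 0" unfolding k_def using Gw by simp
    finally show ?thesis .
  qed
  show ?thesis
  proof (intro exI conjI)
    show "p*tx + q*ty = 1" by (rule pq1)
    show "(l*ty)*tx + (-(l*tx))*ty = 0" by (simp add: algebra_simps)
    have "p*(l*ty)*g11 + (p*(-(l*tx)) + q*(l*ty))*g12 + q*(-(l*tx))*g22 = l * G p q ty (-tx)"
      unfolding G_def by (simp add: algebra_simps)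
    then show "p*(l*ty)*g11 + (p*(-(l*tx)) + q*(l*ty))*g12 + q*(-(l*tx))*g22 = 0" using orth0 by simp
    have "(l*ty)*(l*ty)*g11 + 2*(l*ty)*(-(l*tx))*g12 + (-(l*tx))*(-(l*tx))*g22 = (l*l) * Gw"
      unfolding Gw_def G_def by (simp add: algebra_simps)
    also have "\<dots> = G p q p q" using l2 Gw by simp
    finally show "p*p*g11 + 2*p*q*g12 + q*q*g22 = (l*ty)*(l*ty)*g11 + 2*(l*ty)*(-(l*tx))*g12 + (-(l*tx))*(-(l*tx))*g22"
      unfolding Gsq by simp
    have "p*(-(l*tx)) - q*(l*ty) = - l * (p*tx + q*ty)" by (simp add: algebra_simps)
    also have "\<dots> = - l" using pq1 by simp
    also have "- l > 0" unfolding l_def using Gz Gw by simp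
    finally show "p*(-(l*tx)) - q*(l*ty) > 0" .
  qed
qed



lemma oclass_mem: "a*d - b*c > 0 \<Longrightarrow> (a *\<^sub>R x + b *\<^sub>R y, c *\<^sub>R x + d *\<^sub>R y) \<in> oclass x y"
  unfolding oclass_def by blast

lemma oclass_sub:
  fixes x y :: "'v::real_vector"
  assumes "a*d - b*c > 0"
  shows "oclass (a *\<^sub>R x + b *\<^sub>R y) (c *\<^sub>R x + d *\<^sub>R y) \<subseteq> oclass x y"
proof
  fix z assume "z \<in> oclass (a *\<^sub>R x + b *\<^sub>R y) (c *\<^sub>R x + d *\<^sub>R y)"
  then obtain a' b' c' d' where z: "z = (a' *\<^sub>R (a *\<^sub>R x + b *\<^sub>R y) + b' *\<^sub>R (c *\<^sub>R x + d *\<^sub>R y),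
      c' *\<^sub>R (a *\<^sub>R x + b *\<^sub>R y) + d' *\<^sub>R (c *\<^sub>R x + d *\<^sub>R y))" "a'*d' - b'*c' > 0"
    unfolding oclass_def by blast
  have e1: "a' *\<^sub>R (a *\<^sub>R x + b *\<^sub>R y) + b' *\<^sub>R (c *\<^sub>R x + d *\<^sub>R y) = (a'*a + b'*c) *\<^sub>R x + (a'*b + b'*d) *\<^sub>R y"
    by (simp add: algebra_simps)
  have e2: "c' *\<^sub>R (a *\<^sub>R x + b *\<^sub>R y) + d' *\<^sub>R (c *\<^sub>R x + d *\<^sub>R y) = (c'*a + d'*c) *\<^sub>R x + (c'*b + d'*d) *\<^sub>R y"
    by (simp add: algebra_simps)
  have "(a'*a + b'*c) * (c'*b + d'*d) - (a'*b + b'*d) * (c'*a + d'*c) = (a'*d' - b'*c') * (a*d - b*c)"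
    by (simp add: algebra_simps)
  also have "\<dots> > 0" using assms z(2) by simp
  finally show "z \<in> oclass x y" unfolding z(1) e1 e2 by (rule oclass_mem)
qed

lemma oclass_change:
  fixes x y :: "'v::real_vector"
  assumes D: "a*d - b*c > 0"
  shows "oclass (a *\<^sub>R x + b *\<^sub>R y) (c *\<^sub>R x + d *\<^sub>R y) = oclass x y"
proof
  show "oclass (a *\<^sub>R x + b *\<^sub>R y) (c *\<^sub>R x + d *\<^sub>R y) \<subseteq> oclass x y" using oclass_sub[OF D] .
  define E where "E = a*d - b*c"
  have E: "E \<noteq> 0" "E > 0" using D unfolding E_def by auto
  define X where "X = a *\<^sub>R x + b *\<^sub>R y"
  define Y where "Y = c *\<^sub>R x + d *\<^sub>R y"
  have hx: "(d/E) *\<^sub>R X + (-b/E) *\<^sub>R Y = x"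
  proof -
    have "(d/E) *\<^sub>R X + (-b/E) *\<^sub>R Y = ((d*a - b*c)/E) *\<^sub>R x + ((d*b - b*d)/E) *\<^sub>R y"
      unfolding X_def Y_def by (simp add: algebra_simps diff_divide_distrib add_divide_distrib)
    also have "\<dots> = x" using E unfolding E_def by (simp add: mult.commute)
    finally show ?thesis .
  qed
  have hy: "(-c/E) *\<^sub>R X + (a/E) *\<^sub>R Y = y"
  proof -
    have "(-c/E) *\<^sub>R X + (a/E) *\<^sub>R Y = ((a*c - c*a)/E) *\<^sub>R x + ((a*d - c*b)/E) *\<^sub>R y"
      unfolding X_def Y_def by (simp add: algebra_simps diff_divide_distrib add_divide_distrib)
    also have "\<dots> = y" using E unfolding E_def by (simp add: mult.commute)
    finally show ?thesis .
  qed
  have "(d/E)*(a/E) - (-b/E)*(-c/E) = (a*d - b*c) / (E*E)" using E(1) by (simp add: field_simps)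
  also have "\<dots> = E / (E*E)" by (simp add: E_def)
  also have "\<dots> > 0" using E by simp
  finally have "oclass ((d/E) *\<^sub>R X + (-b/E) *\<^sub>R Y) ((-c/E) *\<^sub>R X + (a/E) *\<^sub>R Y) \<subseteq> oclass X Y"
    by (rule oclass_sub)
  then have "oclass x y \<subseteq> oclass X Y" unfolding hx hy .
  then show "oclass x y \<subseteq> oclass (a *\<^sub>R x + b *\<^sub>R y) (c *\<^sub>R x + d *\<^sub>R y)"
    unfolding X_def Y_def .
qed

lemma pmap_oclass:
  assumes f: "\<And>a b. f (a *\<^sub>R x + b *\<^sub>R y) = a *\<^sub>R f x + b *\<^sub>R f y"
  shows "pmap f (oclass x y) = oclass (f x) (f y)"
proof
  show "pmap f (oclass x y) \<subseteq> oclass (f x) (f y)"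
  proof
    fix z assume "z \<in> pmap f (oclass x y)"
    then obtain p q where pq: "(p, q) \<in> oclass x y" "z = (f p, f q)" unfolding pmap_def by auto
    then obtain a b c d where "p = a *\<^sub>R x + b *\<^sub>R y" "q = c *\<^sub>R x + d *\<^sub>R y" "a*d - b*c > 0"
      unfolding oclass_def by blast
    then show "z \<in> oclass (f x) (f y)" using pq(2) f oclass_mem by metis
  qed
  show "oclass (f x) (f y) \<subseteq> pmap f (oclass x y)"
  proof
    fix z assume "z \<in> oclass (f x) (f y)"
    then obtain a b c d where z: "z = (a *\<^sub>R f x + b *\<^sub>R f y, c *\<^sub>R f x + d *\<^sub>R f y)" "a*d - b*c > 0"
      unfolding oclass_def by blast
    then have "(a *\<^sub>R x + b *\<^sub>R y, c *\<^sub>R x + d *\<^sub>R y) \<in> oclass x y" by (intro oclass_mem)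
    moreover have "z = (\<lambda>(p, q). (f p, f q)) (a *\<^sub>R x + b *\<^sub>R y, c *\<^sub>R x + d *\<^sub>R y)"
      using z f by simp
    ultimately show "z \<in> pmap f (oclass x y)" unfolding pmap_def by blast
  qed
qed

lemma oclass_fst_in: "x \<in> fst ` oclass x y" "y \<in> fst ` oclass x y"
proof -
  have "(1 *\<^sub>R x + 0 *\<^sub>R y, 0 *\<^sub>R x + 1 *\<^sub>R y) \<in> oclass x y" by (rule oclass_mem) simp
  then show "x \<in> fst ` oclass x y" by force
  have "(0 *\<^sub>R x + 1 *\<^sub>R y, (-1) *\<^sub>R x + 0 *\<^sub>R y) \<in> oclass x y" by (rule oclass_mem) simp
  then show "y \<in> fst ` oclass x y" by force
qed

lemma plane_span_oclass: "plane_span (oclass x y) = span {x, y}"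
proof
  have "fst ` oclass x y \<subseteq> span {x, y}"
  proof
    fix z assume "z \<in> fst ` oclass x y"
    then obtain a b c d where "z = a *\<^sub>R x + b *\<^sub>R y" unfolding oclass_def by force
    then show "z \<in> span {x, y}" by (simp add: span_add span_scale span_base)
  qed
  then show "plane_span (oclass x y) \<subseteq> span {x, y}" unfolding plane_span_def
    by (simp add: span_minimal)
  show "span {x, y} \<subseteq> plane_span (oclass x y)" unfolding plane_span_def
    using oclass_fst_in by (intro span_mono) auto
qed



lemma xi_comb: "xi Q v vs (a *\<^sub>R p + b *\<^sub>R q) = a *\<^sub>R xi Q v vs p + b *\<^sub>R xi Q v vs q"
  by (cases p, cases q) (auto simp: xi_def bf_simps algebra_simps)

lemma gammaH1_comb: "gammaH1 Q B (a *\<^sub>R p + b *\<^sub>R q) = a *\<^sub>R gammaH1 Q B p + b *\<^sub>R gammaH1 Q B q"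
  by (simp add: gammaH1_def bf_simps algebra_simps)

lemma subspace_orth_real: "subspace (orth_real Q W)"
  unfolding subspace_def orth_real_def by (simp add: bf_simps)

lemma xi_invol: assumes "bf Q v v = 0" "bf Q vs vs = 0" "bf Q v vs = 1" "bf Q vs v = 1"
  shows "xi Q v vs (xi Q v vs p) = p"
  using assms by (cases p) (simp add: xi_def bf_simps algebra_simps)



lemma mirror_incl:
  fixes Q :: "real^'n^'n" and A B :: "(real^'n) set"
  assumes sym: "\<And>x y. bf Q x y = bf Q y x"
    and vv: "bf Q v v = 0" "bf Q vs vs = 0" "bf Q v vs = 1"
    and sA: "subspace A" and sB: "subspace B"
    and Av: "\<And>a. a \<in> A \<Longrightarrow> bf Q a v = 0 \<and> bf Q a vs = 0"
    and Bv: "\<And>b. b \<in> B \<Longrightarrow> bf Q b v = 0 \<and> bf Q b vs = 0"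
    and AB: "\<And>a b. a \<in> A \<Longrightarrow> b \<in> B \<Longrightarrow> bf Q a b = 0"
    and orthA: "\<And>x. x \<in> orth_real Q A \<Longrightarrow> x - bf Q x vs *\<^sub>R v - bf Q x v *\<^sub>R vs \<in> B"
    and noPos: "\<And>p1 p2. p1 \<in> B \<Longrightarrow> p2 \<in> B \<Longrightarrow>
        \<not> (\<forall>a b. (a \<noteq> 0 \<or> b \<noteq> 0) \<longrightarrow> bf Q (a *\<^sub>R p1 + b *\<^sub>R p2) (a *\<^sub>R p1 + b *\<^sub>R p2) > 0)"
  shows "xi_tilde Q v vs ` (gamma_map Q ` Tbar Q A) \<subseteq> gamma_map Q ` Tbar Q B"
proof
  fix Z assume "Z \<in> xi_tilde Q v vs ` (gamma_map Q ` Tbar Q A)"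
  then obtain P \<omega> B0 where T: "((P, \<omega>), B0) \<in> Tbar Q A"
    and Z: "Z = xi_tilde Q v vs (gamma_map Q ((P, \<omega>), B0))" by auto
  from T have g: "(P, \<omega>) \<in> grpo Q" "\<omega> \<in> A" "B0 \<in> A" "plane_span P \<subseteq> orth_real Q A"
    unfolding Tbar_def by auto
  from g(1) obtain x y where P: "P = oclass x y"
    and ind: "\<forall>a b. a *\<^sub>R x + b *\<^sub>R y = 0 \<longrightarrow> a = 0 \<and> b = 0"
    and pos: "\<forall>z\<in>span {x, y}. z \<noteq> 0 \<longrightarrow> bf Q z z > 0"
    unfolding grpo_def by blast
  from g(1) P have om2: "bf Q \<omega> \<omega> > 0" unfolding grpo_def by blast
  have vs1: "bf Q vs v = 1" using vv sym by metis
  have xA: "x \<in> orth_real Q A" "y \<in> orth_real Q A"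
    using g(4) unfolding P plane_span_oclass by (auto intro: span_base)
  have xB0: "bf Q x B0 = 0" "bf Q y B0 = 0" using xA g(3) unfolding orth_real_def by auto
  define \<alpha> where "\<alpha> = (bf Q \<omega> \<omega> - bf Q B0 B0) / 2"
  define p1 where "p1 = B0 + \<alpha> *\<^sub>R v + vs"
  define p2 where "p2 = \<omega> - bf Q \<omega> B0 *\<^sub>R v"
  define sx where "sx = bf Q x vs"
  define tx where "tx = bf Q x v"
  define sy where "sy = bf Q y vs"
  define ty where "ty = bf Q y v"
  define bx where "bx = x - sx *\<^sub>R v - tx *\<^sub>R vs"
  define "by" where "by = y - sy *\<^sub>R v - ty *\<^sub>R vs"
  have bxB: "bx \<in> B" "by \<in> B" using orthA xA unfolding bx_def by_def sx_def tx_def sy_def ty_def by auto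
  have xdec: "x = bx + sx *\<^sub>R v + tx *\<^sub>R vs" "y = by + sy *\<^sub>R v + ty *\<^sub>R vs"
    unfolding bx_def by_def by auto
  have B0v: "bf Q B0 v = 0" "bf Q B0 vs = 0" "bf Q v B0 = 0" "bf Q vs B0 = 0"
    using Av[OF g(3)] sym by metis+
  have omv: "bf Q \<omega> v = 0" "bf Q \<omega> vs = 0" "bf Q v \<omega> = 0" "bf Q vs \<omega> = 0"
    using Av[OF g(2)] sym by metis+
  have bxv: "bf Q bx v = 0" "bf Q bx vs = 0" "bf Q v bx = 0" "bf Q vs bx = 0"
    "bf Q by v = 0" "bf Q by vs = 0" "bf Q v by = 0" "bf Q vs by = 0"
    using Bv[OF bxB(1)] Bv[OF bxB(2)] sym by metis+
  have symb: "bf Q by bx = bf Q bx by" by (rule sym)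
  have symo: "bf Q B0 \<omega> = bf Q \<omega> B0" by (rule sym)
  have xi1: "xi Q v vs (B0, \<alpha>, 1) = (p1, 0, 0)"
    unfolding xi_def p1_def using B0v by simp
  have xi2: "xi Q v vs (\<omega>, - bf Q \<omega> B0, 0) = (p2, 0, 0)"
    unfolding xi_def p2_def using omv by (simp add: algebra_simps)
  have xi3: "xi Q v vs (x, 0, 0) = (bx, sx, tx)" "xi Q v vs (y, 0, 0) = (by, sy, ty)"
    unfolding xi_def bx_def by_def sx_def tx_def sy_def ty_def by simp_all
  have gH: "gammaH1 Q B0 x = (x, 0, 0)" "gammaH1 Q B0 y = (y, 0, 0)"
    unfolding gammaH1_def using xB0 by simp_all
  have Zeq: "Z = (oclass (p1, 0, 0) (p2, 0, 0), oclass (bx, sx, tx) (by, sy, ty))"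
  proof -
    have "gamma_map Q ((P, \<omega>), B0) = (pmap (gammaH1 Q B0) P, oclass (B0, \<alpha>, 1) (\<omega>, - bf Q \<omega> B0, 0))"
      unfolding gamma_map_def \<alpha>_def by simp
    also have "pmap (gammaH1 Q B0) P = oclass (x, 0, 0) (y, 0, 0)"
      unfolding P by (subst pmap_oclass) (simp_all add: gammaH1_comb gH)
    finally have "gamma_map Q ((P, \<omega>), B0) = (oclass (x, 0, 0) (y, 0, 0), oclass (B0, \<alpha>, 1) (\<omega>, - bf Q \<omega> B0, 0))" .
    moreover have "pmap (xi Q v vs) (oclass (B0, \<alpha>, 1) (\<omega>, - bf Q \<omega> B0, 0)) = oclass (p1, 0, 0) (p2, 0, 0)"
      unfolding xi1[symmetric] xi2[symmetric] by (rule pmap_oclass) (rule xi_comb)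
    moreover have "pmap (xi Q v vs) (oclass (x, 0, 0) (y, 0, 0)) = oclass (bx, sx, tx) (by, sy, ty)"
      unfolding xi3[symmetric] by (rule pmap_oclass) (rule xi_comb)
    ultimately show ?thesis unfolding Z xi_tilde_def by simp
  qed
  define g11 where "g11 = bf Q bx bx + 2 * sx * tx"
  define g12 where "g12 = bf Q bx by + sx * ty + tx * sy"
  define g22 where "g22 = bf Q by by + 2 * sy * ty"
  have gram: "a * a * g11 + 2 * a * b * g12 + b * b * g22 = bf Q (a *\<^sub>R x + b *\<^sub>R y) (a *\<^sub>R x + b *\<^sub>R y)" for a b
    unfolding g11_def g12_def g22_def xdec
    by (simp add: bf_simps bxv vv vs1 symb algebra_simps)
  have pd: "a * a * g11 + 2 * a * b * g12 + b * b * g22 > 0" if "a \<noteq> 0 \<or> b \<noteq> 0" for a b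
  proof -
    have "a *\<^sub>R x + b *\<^sub>R y \<noteq> 0" using ind that by blast
    moreover have "a *\<^sub>R x + b *\<^sub>R y \<in> span {x, y}" unfolding span2 by blast
    ultimately show ?thesis unfolding gram using pos by blast
  qed
  have t: "tx \<noteq> 0 \<or> ty \<noteq> 0"
  proof (rule ccontr)
    assume "\<not> ?thesis"
    then have t0: "tx = 0" "ty = 0" by auto
    have "bf Q (a *\<^sub>R bx + b *\<^sub>R by) (a *\<^sub>R bx + b *\<^sub>R by) = a * a * g11 + 2 * a * b * g12 + b * b * g22" for a b
      unfolding g11_def g12_def g22_def t0 by (simp add: bf_simps symb algebra_simps)
    then have "\<forall>a b. (a \<noteq> 0 \<or> b \<noteq> 0) \<longrightarrow> bf Q (a *\<^sub>R bx + b *\<^sub>R by) (a *\<^sub>R bx + b *\<^sub>R by) > 0"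
      using pd by auto
    then show False using noPos[OF bxB] by blast
  qed
  obtain m11 m12 m21 m22 where m: "m11 * tx + m12 * ty = 1" "m21 * tx + m22 * ty = 0"
     "m11 * m21 * g11 + (m11 * m22 + m12 * m21) * g12 + m12 * m22 * g22 = 0"
     "m11 * m11 * g11 + 2 * m11 * m12 * g12 + m12 * m12 * g22 = m21 * m21 * g11 + 2 * m21 * m22 * g12 + m22 * m22 * g22"
     "m11 * m22 - m12 * m21 > 0"
    using plane_alg[OF pd t] by blast
  define B' where "B' = m11 *\<^sub>R bx + m12 *\<^sub>R by"
  define \<omega>' where "\<omega>' = m21 *\<^sub>R bx + m22 *\<^sub>R by"
  define sg where "sg = m11 * sx + m12 * sy"
  define sgp where "sgp = m21 * sx + m22 * sy"
  have B'B: "B' \<in> B" "\<omega>' \<in> B" unfolding B'_def \<omega>'_def using bxB sB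
    by (simp_all add: subspace_add subspace_scale)
  have e11: "m11 * m11 * g11 + 2 * m11 * m12 * g12 + m12 * m12 * g22 = bf Q B' B' + 2* sg * (m11 * tx + m12 * ty)"
    unfolding g11_def g12_def g22_def B'_def sg_def by (simp add: bf_simps symb algebra_simps)
  have e22: "m21 * m21 * g11 + 2 * m21 * m22 * g12 + m22 * m22 * g22 = bf Q \<omega>' \<omega>' + 2* sgp * (m21 * tx + m22 * ty)"
    unfolding g11_def g12_def g22_def \<omega>'_def sgp_def by (simp add: bf_simps symb algebra_simps)
  have e12: "m11 * m21 * g11 + (m11 * m22 + m12 * m21) * g12 + m12 * m22 * g22 = bf Q \<omega>' B' + sg * (m21 * tx + m22 * ty) + sgp * (m11 * tx + m12 * ty)"
    unfolding g11_def g12_def g22_def \<omega>'_def B'_def sg_def sgp_def by (simp add: bf_simps symb algebra_simps)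
  have sig: "sg = (bf Q \<omega>' \<omega>' - bf Q B' B') / 2" using e11 e22 m(1,2,4) by simp
  have sig': "sgp = - bf Q \<omega>' B'" using e12 m(1,2,3) by simp
  have om'pos: "bf Q \<omega>' \<omega>' > 0"
  proof -
    have "m21 \<noteq> 0 \<or> m22 \<noteq> 0" using m(5) by auto
    then have "m21 * m21 * g11 + 2 * m21 * m22 * g12 + m22 * m22 * g22 > 0" by (rule pd)
    then show ?thesis using e22 m(2) by simp
  qed
  have cls: "oclass (bx, sx, tx) (by, sy, ty) = oclass (B', (bf Q \<omega>' \<omega>' - bf Q B' B') / 2, 1) (\<omega>', - bf Q \<omega>' B', 0)"
  proof -
    have "oclass (bx, sx, tx) (by, sy, ty) = oclass (m11 *\<^sub>R (bx, sx, tx) + m12 *\<^sub>R (by, sy, ty)) (m21 *\<^sub>R (bx, sx, tx) + m22 *\<^sub>R (by, sy, ty))"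
      by (rule oclass_change[OF m(5), symmetric])
    also have "m11 *\<^sub>R (bx, sx, tx) + m12 *\<^sub>R (by, sy, ty) = (B', (bf Q \<omega>' \<omega>' - bf Q B' B') / 2, 1)"
      using m(1) sig unfolding B'_def sg_def by simp
    also have "m21 *\<^sub>R (bx, sx, tx) + m22 *\<^sub>R (by, sy, ty) = (\<omega>', - bf Q \<omega>' B', 0)"
      using m(2) sig' unfolding \<omega>'_def sgp_def by simp
    finally show ?thesis .
  qed
  have pB: "bf Q p1 b = 0" "bf Q p2 b = 0" "bf Q b p1 = 0" "bf Q b p2 = 0" if "b \<in> B" for b
  proof -
    have h: "bf Q B0 b = 0" "bf Q \<omega> b = 0" "bf Q v b = 0" "bf Q vs b = 0"
      using AB[OF g(3) that] AB[OF g(2) that] Bv[OF that] sym by metis+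
    show "bf Q p1 b = 0" "bf Q p2 b = 0" unfolding p1_def p2_def by (simp_all add: bf_simps h)
    then show "bf Q b p1 = 0" "bf Q b p2 = 0" using sym by metis+
  qed
  have pgram: "bf Q (a *\<^sub>R p1 + b *\<^sub>R p2) (a *\<^sub>R p1 + b *\<^sub>R p2) = (a * a + b * b) * bf Q \<omega> \<omega>" for a b
    unfolding p1_def p2_def \<alpha>_def by (simp add: bf_simps vv vs1 B0v omv symo algebra_simps)
  have ppos: "bf Q z z > 0" if hz: "z \<in> span {p1, p2}" and hnz: "z \<noteq> 0" for z
  proof -
    obtain a b where z: "z = a *\<^sub>R p1 + b *\<^sub>R p2" using hz unfolding span2 by blast
    then have "a \<noteq> 0 \<or> b \<noteq> 0" using hnz by auto
    then have "a * a + b * b > 0" by (simp add: sum_squares_gt_zero_iff)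
    then show ?thesis unfolding z pgram using om2 by simp
  qed
  have pind: "a = 0 \<and> b = 0" if "a *\<^sub>R p1 + b *\<^sub>R p2 = 0" for a b
  proof -
    have "(a * a + b * b) * bf Q \<omega> \<omega> = 0" using that pgram[of a b] by (simp add: bf_simps)
    then have "a * a + b * b = 0" using om2 by simp
    then show ?thesis by (simp add: sum_squares_eq_zero_iff)
  qed
  have porth: "bf Q z \<omega>' = 0" if hz: "z \<in> span {p1, p2}" for z
  proof -
    obtain a b where z: "z = a *\<^sub>R p1 + b *\<^sub>R p2" using hz unfolding span2 by blast
    then show ?thesis using pB[OF B'B(2)] by (simp add: bf_simps)
  qed
  have grpo': "(oclass p1 p2, \<omega>') \<in> grpo Q"
    unfolding grpo_def using pind ppos porth om'pos by blast
  have ps: "plane_span (oclass p1 p2) \<subseteq> orth_real Q B"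
  proof -
    have "{p1, p2} \<subseteq> orth_real Q B" unfolding orth_real_def using pB by blast
    then show ?thesis unfolding plane_span_oclass using subspace_orth_real by (rule span_minimal)
  qed
  have inT: "((oclass p1 p2, \<omega>'), B') \<in> Tbar Q B"
    unfolding Tbar_def using grpo' B'B ps by blast
  have gH': "gammaH1 Q B' p1 = (p1, 0, 0)" "gammaH1 Q B' p2 = (p2, 0, 0)"
    unfolding gammaH1_def using pB[OF B'B(1)] by simp_all
  have "gamma_map Q ((oclass p1 p2, \<omega>'), B') = (pmap (gammaH1 Q B') (oclass p1 p2),
      oclass (B', (bf Q \<omega>' \<omega>' - bf Q B' B') / 2, 1) (\<omega>', - bf Q \<omega>' B', 0))"
    unfolding gamma_map_def by simp
  also have "\<dots> = Z" unfolding Zeq cls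
    by (subst pmap_oclass) (simp_all add: gammaH1_comb gH')
  finally show "Z \<in> gamma_map Q ` Tbar Q B" using inT by (metis image_eqI)
qed



definition qE8 :: "(nat \<Rightarrow> real) \<Rightarrow> real" where
  "qE8 y = - 2 * (y 0 * y 0 + y 1 * y 1 + y 2 * y 2 + y 3 * y 3 + y 4 * y 4 + y 5 * y 5 + y 6 * y 6 + y 7 * y 7)
     + 2 * (y 0 * y 2 + y 1 * y 3 + y 2 * y 3 + y 3 * y 4 + y 4 * y 5 + y 5 * y 6 + y 6 * y 7)"

lemma upt22: "[0..<22] = [0,1,2,3,4,5,6,7,8,9,10,11,12,13,14,15,16,17,18,19,20,21]"
  by (simp add: upt_rec)

lemma qf_explicit:
  "(\<Sum>k\<in>{0..<22}. \<Sum>l\<in>{0..<22}. y k * of_int (K3gram k l) * y l) =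
    qE8 y + qE8 (\<lambda>i. y (i + 8)) + 2 * (y 16 * y 17 + y 18 * y 19 + y 20 * y 21)"
  unfolding atLeastLessThan_upt sum_set_upt_conv_sum_list_nat upt22
  by (simp add: qE8_def K3gram_def mE8_def e8edge_def algebra_simps)



lemma qE8_sos: "- qE8 y = 2*(y 0 - y 2/2)^2 + 2*(y 1 - y 3/2)^2 + 3/2*(y 2 - 2/3*y 3)^2 + 5/6*(y 3 - 6/5*y 4)^2
   + 4/5*(y 4 - 5/4*y 5)^2 + 3/4*(y 5 - 4/3*y 6)^2 + 2/3*(y 6 - 3/2*y 7)^2 + 1/2*(y 7)^2"
  unfolding qE8_def by (simp add: power2_eq_square field_simps)

lemma qE8_le: "qE8 y \<le> 0"
proof -
  have "- qE8 y \<ge> 0" unfolding qE8_sos by (intro add_nonneg_nonneg) simp_all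
  then show ?thesis by linarith
qed

lemma qE8_zero: assumes "qE8 y = 0" shows "\<forall>i<8. y i = 0"
proof -
  have z: "2*(y 0 - y 2/2)^2 + 2*(y 1 - y 3/2)^2 + 3/2*(y 2 - 2/3*y 3)^2 + 5/6*(y 3 - 6/5*y 4)^2
   + 4/5*(y 4 - 5/4*y 5)^2 + 3/4*(y 5 - 4/3*y 6)^2 + 2/3*(y 6 - 3/2*y 7)^2 + 1/2*(y 7)^2 = 0"
    using qE8_sos[of y] assms by simp
  have "(y 0 - y 2/2)^2 = 0 \<and> (y 1 - y 3/2)^2 = 0 \<and> (y 2 - 2/3*y 3)^2 = 0 \<and> (y 3 - 6/5*y 4)^2 = 0
     \<and> (y 4 - 5/4*y 5)^2 = 0 \<and> (y 5 - 4/3*y 6)^2 = 0 \<and> (y 6 - 3/2*y 7)^2 = 0 \<and> (y 7)^2 = 0"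
  proof -
    have nn: "0 \<le> (a::real)^2" for a by simp
    show ?thesis using z nn[of "y 0 - y 2/2"] nn[of "y 1 - y 3/2"] nn[of "y 2 - 2/3*y 3"]
      nn[of "y 3 - 6/5*y 4"] nn[of "y 4 - 5/4*y 5"] nn[of "y 5 - 4/3*y 6"] nn[of "y 6 - 3/2*y 7"] nn[of "y 7"]
      by linarith
  qed
  then have "y 7 = 0" "y 6 = 3/2*y 7" "y 5 = 4/3*y 6" "y 4 = 5/4*y 5" "y 3 = 6/5*y 4"
    "y 2 = 2/3*y 3" "y 1 = y 3/2" "y 0 = y 2/2" by auto
  then have "y 0 = 0" "y 1 = 0" "y 2 = 0" "y 3 = 0" "y 4 = 0" "y 5 = 0" "y 6 = 0" "y 7 = 0" by simp_all
  then show ?thesis by (auto simp: less_Suc_eq numeral_eq_Suc)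
qed



lemma sum22: "(\<Sum>k\<in>{0..<22::nat}. f k) = f 0 + f 1 + f 2 + f 3 + f 4 + f 5 + f 6 + f 7 + f 8 + f 9 + f 10 + f 11
   + f 12 + f 13 + f 14 + f 15 + f 16 + f 17 + f 18 + f 19 + f 20 + (f 21 :: real)"
  unfolding atLeastLessThan_upt sum_set_upt_conv_sum_list_nat upt22 by (simp add: algebra_simps)

context
  fixes e :: "'n::finite \<Rightarrow> nat"
  assumes bij: "bij_betw e UNIV {0..<22}"
begin

lemma e_inv: "k < 22 \<Longrightarrow> e (inv e k) = k"
  using bij_betw_inv_into_right[OF bij, of k] by simp

lemma inv_e: "inv e (e i) = i"
  using bij by (simp add: bij_betw_def)

lemma e_lt: "e i < 22"
  using bij by (auto simp: bij_betw_def)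

lemma card22: "CARD('n) = 22"
  using bij_betw_same_card[OF bij] by simp

lemma dimUNIV: "dim (UNIV :: (real^'n) set) = 22"
  by (simp add: card22)

lemma reidx: "(\<Sum>i\<in>UNIV. g i) = (\<Sum>k\<in>{0..<22}. g (inv e k))"
  using sum.reindex_bij_betw[OF bij, of "\<lambda>k. g (inv e k)"] by (simp add: inv_e)

lemma vec_zero_coord: "(x :: real^'n) = 0 \<longleftrightarrow> (\<forall>k<22. x $ inv e k = 0)"
proof
  assume "\<forall>k<22. x $ inv e k = 0"
  then have "x $ i = 0" for i using e_lt[of i] inv_e[of i] by metis
  then show "x = 0" by (simp add: vec_eq_iff)
qed simp

lemma inner_coord: "(x :: real^'n) \<bullet> z = (\<Sum>k\<in>{0..<22}. x $ inv e k * z $ inv e k)"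
  unfolding inner_vec_def by (simp add: reidx)

lemma bf_coord:
  assumes Qd: "\<And>i j. Q $ i $ j = of_int (K3gram (e i) (e j))"
  shows "bf Q x x = qE8 (\<lambda>k. x $ inv e k) + qE8 (\<lambda>k. x $ inv e (k + 8))
     + 2 * (x $ inv e 16 * x $ inv e 17 + x $ inv e 18 * x $ inv e 19 + x $ inv e 20 * x $ inv e 21)"
proof -
  have "bf Q x x = (\<Sum>i\<in>UNIV. \<Sum>j\<in>UNIV. x $ i * of_int (K3gram (e i) (e j)) * x $ j)"
    unfolding bf_def inner_vec_def matrix_vector_mult_def
    by (simp add: Qd sum_distrib_left mult.assoc)
  also have "\<dots> = (\<Sum>k\<in>{0..<22}. \<Sum>l\<in>{0..<22}. x $ inv e k * of_int (K3gram k l) * x $ inv e l)"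
    unfolding reidx by (intro sum.cong refl) (simp add: e_inv)
  also have "\<dots> = qE8 (\<lambda>k. x $ inv e k) + qE8 (\<lambda>k. x $ inv e (k + 8))
     + 2 * (x $ inv e 16 * x $ inv e 17 + x $ inv e 18 * x $ inv e 19 + x $ inv e 20 * x $ inv e 21)"
    by (rule qf_explicit)
  finally show ?thesis .
qed

definition mkv :: "(nat \<Rightarrow> real) \<Rightarrow> real^'n" where "mkv f = (\<chi> i. f (e i))"

lemma mkv_coord: "k < 22 \<Longrightarrow> mkv f $ inv e k = f k"
  unfolding mkv_def by (simp add: e_inv)

definition av :: "nat \<Rightarrow> real^'n" where "av k0 = mkv (\<lambda>j. if j = k0 \<or> j = k0 + 1 then 1 else 0)"

lemma inner_av:
  "x \<bullet> av 16 = x $ inv e 16 + x $ inv e 17"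
  "x \<bullet> av 18 = x $ inv e 18 + x $ inv e 19"
  "x \<bullet> av 20 = x $ inv e 20 + x $ inv e 21"
  unfolding inner_coord sum22 av_def by (simp_all add: mkv_coord)

lemma av_coord: "av 16 $ inv e 16 = 1" "av 18 $ inv e 18 = 1" "av 20 $ inv e 20 = 1"
  "av 16 $ inv e 18 = 0" "av 18 $ inv e 16 = 0" "av 20 $ inv e 16 = 0" "av 16 $ inv e 20 = 0" "av 18 $ inv e 20 = 0" "av 20 $ inv e 18 = 0"
  unfolding av_def by (simp_all add: mkv_coord)

lemma av_coord_gen: "k < 22 \<Longrightarrow> av k0 $ inv e k = (if k = k0 \<or> k = k0 + 1 then 1 else 0)"
  unfolding av_def by (simp add: mkv_coord)

lemma av_indep: "independent {av 16, av 18, av 20}" and av_card: "card {av 16, av 18, av 20} = 3"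
proof -
  have "pairwise orthogonal {av 16, av 18, av 20}"
    unfolding pairwise_def orthogonal_def by (auto simp: inner_av av_coord_gen)
  moreover have "0 \<notin> {av 16, av 18, av 20}" using av_coord by auto
  ultimately show "independent {av 16, av 18, av 20}" by (rule pairwise_orthogonal_independent)
  have "av 16 \<noteq> av 18" "av 16 \<noteq> av 20" "av 18 \<noteq> av 20" using av_coord by (metis zero_neq_one)+
  then show "card {av 16, av 18, av 20} = 3" by simp
qed

end


lemma mE8_sym: "mE8 i j = mE8 j i"
  unfolding mE8_def by (simp add: disj_commute eq_commute)

lemma K3gram_sym: "K3gram i j = K3gram j i"
proof -
  have a: "(i < 8 \<and> j < 8) \<longleftrightarrow> (j < 8 \<and> i < 8)" by blast
  have b: "(8 \<le> i \<and> i < 16 \<and> 8 \<le> j \<and> j < 16) \<longleftrightarrow> (8 \<le> j \<and> j < 16 \<and> 8 \<le> i \<and> i < 16)" by blast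
  have c: "(16 \<le> i \<and> i < 22 \<and> 16 \<le> j \<and> j < 22 \<and> i \<noteq> j \<and> (i - 16) div 2 = (j - 16) div 2) \<longleftrightarrow>
           (16 \<le> j \<and> j < 22 \<and> 16 \<le> i \<and> i < 22 \<and> j \<noteq> i \<and> (j - 16) div 2 = (i - 16) div 2)" by auto
  show ?thesis unfolding K3gram_def a b c mE8_sym[of i j] mE8_sym[of "i-8" "j-8"] ..
qed

lemma sq3: "(a::real) \<noteq> 0 \<or> b \<noteq> 0 \<or> c \<noteq> 0 \<Longrightarrow> a*a + b*b + c*c > 0"
proof -
  assume h: "a \<noteq> 0 \<or> b \<noteq> 0 \<or> c \<noteq> 0"
  have "a*a \<ge> 0" "b*b \<ge> 0" "c*c \<ge> 0" by simp_all
  moreover have "a*a > 0 \<or> b*b > 0 \<or> c*c > 0" using h by (auto simp: zero_less_mult_iff linorder_neq_iff)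
  ultimately show ?thesis by linarith
qed

context
  fixes e :: "'n::finite \<Rightarrow> nat" and Q :: "real^'n^'n"
  assumes bij: "bij_betw e UNIV {0..<22}"
    and Qd: "\<And>i j. Q $ i $ j = of_int (K3gram (e i) (e j))"
begin

lemma K_sym: "bf Q x y = bf Q y x"
proof -
  have "transpose Q = Q" unfolding transpose_def by (simp add: vec_eq_iff Qd K3gram_sym)
  then show ?thesis by (rule bf_sym)
qed

definition S3 :: "(real^'n) set" where
  "S3 = {x. (\<forall>k<16. x $ inv e k = 0) \<and> x $ inv e 16 = x $ inv e 17 \<and> x $ inv e 18 = x $ inv e 19
     \<and> x $ inv e 20 = x $ inv e 21}"

lemma S3_sub: "subspace S3"
  unfolding subspace_def S3_def by simp

lemma S3_dim: "dim S3 \<ge> 3"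
proof -
  have "{av e 16, av e 18, av e 20} \<subseteq> S3"
    unfolding S3_def by (simp add: av_coord_gen[OF bij])
  from independent_card_le_dim[OF this av_indep[OF bij]] show ?thesis using av_card[OF bij] by simp
qed

lemma all22: "(\<forall>k<22. P k) \<longleftrightarrow> (\<forall>k<16. P k) \<and> P 16 \<and> P 17 \<and> P 18 \<and> P 19 \<and> P 20 \<and> P (21::nat)"
proof -
  have "k < 22 \<longleftrightarrow> k < 16 \<or> k = 16 \<or> k = 17 \<or> k = 18 \<or> k = 19 \<or> k = 20 \<or> k = 21" for k :: nat by auto
  then show ?thesis by auto
qed

lemma S3_pos: "posdef_sub Q S3"
  unfolding posdef_sub_def
proof (intro conjI ballI impI)
  show "subspace S3" by (rule S3_sub)
  fix x assume x: "x \<in> S3" "x \<noteq> 0"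
  have z: "\<forall>k<16. x $ inv e k = 0" using x unfolding S3_def by blast
  then have q1: "qE8 (\<lambda>k. x $ inv e k) = 0" and q2: "qE8 (\<lambda>k. x $ inv e (k + 8)) = 0"
    unfolding qE8_def by simp_all
  have eqs: "x $ inv e 17 = x $ inv e 16" "x $ inv e 19 = x $ inv e 18" "x $ inv e 21 = x $ inv e 20"
    using x unfolding S3_def by auto
  have nz: "x $ inv e 16 \<noteq> 0 \<or> x $ inv e 18 \<noteq> 0 \<or> x $ inv e 20 \<noteq> 0"
    using x(2) z eqs unfolding vec_zero_coord[OF bij] all22 by auto
  have "bf Q x x = 2 * (x $ inv e 16 * x $ inv e 16 + x $ inv e 18 * x $ inv e 18 + x $ inv e 20 * x $ inv e 20)"
    unfolding bf_coord[OF bij Qd] q1 q2 eqs by simp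
  also have "\<dots> > 0" using sq3[OF nz] by simp
  finally show "bf Q x x > 0" .
qed

definition T19 :: "(real^'n) set" where
  "T19 = {y. \<forall>x\<in>span {av e 16, av e 18, av e 20}. orthogonal x y}"

lemma T19_sub: "subspace T19"
  unfolding T19_def by (rule subspace_orthogonal_to_vectors)

lemma T19_dim: "dim T19 = 19"
proof -
  have "dim {y \<in> UNIV. \<forall>x\<in>span {av e 16, av e 18, av e 20}. orthogonal x y} + dim (span {av e 16, av e 18, av e 20}) = dim (UNIV :: (real^'n) set)"
    by (rule dim_subspace_orthogonal_to_vectors) auto
  moreover have "dim (span {av e 16, av e 18, av e 20}) = 3"
    using dim_span_eq_card_independent[OF av_indep[OF bij]] av_card[OF bij] by simp
  ultimately show ?thesis unfolding T19_def using dimUNIV[OF bij] by simp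
qed

lemma T19_neg: "negdef_sub Q T19"
  unfolding negdef_sub_def
proof (intro conjI ballI impI)
  show "subspace T19" by (rule T19_sub)
  fix y assume y: "y \<in> T19" "y \<noteq> 0"
  have "orthogonal (av e 16) y" "orthogonal (av e 18) y" "orthogonal (av e 20) y"
    using y(1) unfolding T19_def by (auto intro: span_base)
  then have o: "y $ inv e 17 = - y $ inv e 16" "y $ inv e 19 = - y $ inv e 18" "y $ inv e 21 = - y $ inv e 20"
    unfolding orthogonal_def using inner_av[OF bij, of y] by (simp_all add: inner_commute eq_neg_iff_add_eq_0)
  have b: "bf Q y y = qE8 (\<lambda>k. y $ inv e k) + qE8 (\<lambda>k. y $ inv e (k + 8))
     - 2 * (y $ inv e 16 * y $ inv e 16 + y $ inv e 18 * y $ inv e 18 + y $ inv e 20 * y $ inv e 20)"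
    unfolding bf_coord[OF bij Qd] o by simp
  show "bf Q y y < 0"
  proof (rule ccontr)
    assume "\<not> bf Q y y < 0"
    have sq: "0 \<le> y $ inv e k * y $ inv e k" for k by simp
    have b0: "bf Q y y \<ge> 0" using \<open>\<not> bf Q y y < 0\<close> by simp
    define qa where "qa = qE8 (\<lambda>k. y $ inv e k)"
    define qb where "qb = qE8 (\<lambda>k. y $ inv e (k + 8))"
    have qa: "qa \<le> 0" unfolding qa_def by (rule qE8_le)
    have qb: "qb \<le> 0" unfolding qb_def by (rule qE8_le)
    have sm: "qa + qb - 2 * (y $ inv e 16 * y $ inv e 16 + y $ inv e 18 * y $ inv e 18 + y $ inv e 20 * y $ inv e 20) \<ge> 0"
      using b0 b unfolding qa_def qb_def by simp
    note L = sm qa qb sq[of 16] sq[of 18] sq[of 20]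
    have g1: "qE8 (\<lambda>k. y $ inv e k) \<ge> 0" using L unfolding qa_def[symmetric] by smt
    have g2: "qE8 (\<lambda>k. y $ inv e (k + 8)) \<ge> 0" using L unfolding qb_def[symmetric] by smt
    have g3: "y $ inv e 16 * y $ inv e 16 \<le> 0" using L by smt
    have g4: "y $ inv e 18 * y $ inv e 18 \<le> 0" using L by smt
    have g5: "y $ inv e 20 * y $ inv e 20 \<le> 0" using L by smt
    note g = g1 g2 g3 g4 g5
    have q: "qE8 (\<lambda>k. y $ inv e k) = 0" "qE8 (\<lambda>k. y $ inv e (k + 8)) = 0"
      "y $ inv e 16 * y $ inv e 16 = 0" "y $ inv e 18 * y $ inv e 18 = 0" "y $ inv e 20 * y $ inv e 20 = 0"
      by (rule order_antisym[OF qE8_le g1], rule order_antisym[OF qE8_le g2],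
          rule order_antisym[OF g3 sq], rule order_antisym[OF g4 sq], rule order_antisym[OF g5 sq])
    have lo: "y $ inv e k = 0" if "k < 16" for k
    proof (cases "k < 8")
      case True then show ?thesis using qE8_zero[OF q(1)] by auto
    next
      case False
      then have "k - 8 < 8" using that by auto
      then show ?thesis using qE8_zero[OF q(2)] False by auto
    qed
    have "y = 0" unfolding vec_zero_coord[OF bij] all22 using lo q(3-5) o by simp
    then show False using y(2) by simp
  qed
qed

lemma K_posbound: "posdef_sub Q S \<Longrightarrow> dim S \<le> 3"
  using UB[of Q S T19 UNIV] T19_neg T19_dim dimUNIV[OF bij] by auto

lemma K_negbound: "negdef_sub Q T \<Longrightarrow> dim T \<le> 19"
  using UB[of Q S3 T UNIV] S3_pos S3_dim dimUNIV[OF bij] by auto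

lemma K_inj: "Q *v x = 0 \<Longrightarrow> x = 0"
proof -
  assume h: "Q *v x = 0"
  have "bf Q x y = 0" for y using K_sym[of x y] h by (simp add: bf_def)
  then show "x = 0"
    using ND[of Q UNIV S3 T19 x] K_sym S3_pos T19_neg S3_dim T19_dim dimUNIV[OF bij] by auto
qed

end


lemma latt_add: "x \<in> latt \<Longrightarrow> y \<in> latt \<Longrightarrow> x + y \<in> latt"
  unfolding latt_def by simp
lemma latt_diff: "x \<in> latt \<Longrightarrow> y \<in> latt \<Longrightarrow> x - y \<in> latt"
  unfolding latt_def by simp
lemma latt_scale: "x \<in> latt \<Longrightarrow> c \<in> \<int> \<Longrightarrow> c *\<^sub>R x \<in> latt"
  unfolding latt_def by simp
lemma latt_zero: "0 \<in> latt"
  unfolding latt_def by simp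
lemma latt_inner: "x \<in> latt \<Longrightarrow> y \<in> latt \<Longrightarrow> x \<bullet> y \<in> \<int>"
  unfolding latt_def inner_vec_def by (auto intro!: Ints_sum Ints_mult)
lemma latt_Qv:
  assumes "\<And>i j. Q $ i $ j \<in> \<int>" "y \<in> latt"
  shows "Q *v y \<in> latt"
  using assms unfolding latt_def matrix_vector_mult_def by (auto intro!: Ints_sum Ints_mult)
lemma latt_bf:
  assumes "\<And>i j. Q $ i $ j \<in> \<int>" "x \<in> latt" "y \<in> latt"
  shows "bf Q x y \<in> \<int>"
  unfolding bf_def using assms latt_Qv latt_inner by blast

lemma Basis_latt: "(Basis :: (real^'n) set) \<subseteq> latt"
proof
  fix x :: "real^'n" assume "x \<in> Basis"
  then obtain i u where "x = axis i u" "u \<in> (Basis :: real set)" unfolding Basis_vec_def by blast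
  then have "x = axis i 1" by simp
  then show "x \<in> latt" unfolding latt_def axis_def by simp
qed

definition Kset :: "(real^'n) set \<Rightarrow> (real^'n) set" where
  "Kset A = {x. \<forall>a\<in>A. x \<bullet> a = 0}"

lemma subspace_Kset: "subspace (Kset A)"
  unfolding subspace_def Kset_def by (simp add: inner_add_left)

lemma RAT:
  fixes A :: "(real^'n) set"
  assumes "finite A" "A \<subseteq> latt"
  shows "\<exists>S. finite S \<and> S \<subseteq> latt \<and> S \<subseteq> Kset A \<and> span S = Kset A"
  using assms
proof (induct A rule: finite_induct)
  case empty
  have "span (Basis :: (real^'n) set) = UNIV" by (rule span_Basis)
  then show ?case using Basis_latt unfolding Kset_def by (intro exI[of _ Basis]) auto
next
  case (insert a A)
  then obtain S where S: "finite S" "S \<subseteq> latt" "S \<subseteq> Kset A" "span S = Kset A" by auto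
  have alatt: "a \<in> latt" using insert by auto
  have Kins: "Kset (insert a A) = Kset A \<inter> {x. x \<bullet> a = 0}" unfolding Kset_def by auto
  show ?case
  proof (cases "\<forall>s\<in>S. s \<bullet> a = 0")
    case True
    have "span S \<subseteq> {x. x \<bullet> a = 0}"
    proof (rule span_minimal)
      show "S \<subseteq> {x. x \<bullet> a = 0}" using True by auto
      show "subspace {x. x \<bullet> a = 0}" unfolding subspace_def by (simp add: inner_add_left)
    qed
    then have "span S = Kset (insert a A)" using S(4) Kins by auto
    moreover have "S \<subseteq> Kset (insert a A)" using S(3) True Kins by auto
    ultimately show ?thesis using S by blast
  next
    case False
    then obtain s0 where s0: "s0 \<in> S" "s0 \<bullet> a \<noteq> 0" by blast
    define k where "k = s0 \<bullet> a"
    define g where "g = (\<lambda>t. k *\<^sub>R t - (t \<bullet> a) *\<^sub>R s0)"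
    have s0l: "s0 \<in> latt" using s0 S by auto
    have gl: "g t \<in> latt" if "t \<in> S" for t
    proof -
      have "t \<in> latt" using that S by auto
      then show ?thesis unfolding g_def k_def
        using latt_diff latt_scale latt_inner s0l alatt by metis
    qed
    have gK: "g t \<in> Kset (insert a A)" if "t \<in> S" for t
    proof -
      have "t \<in> Kset A" "s0 \<in> Kset A" using that s0 S by auto
      then show ?thesis unfolding Kset_def g_def k_def by (auto simp: inner_diff_left)
    qed
    have "span (g ` S) = Kset (insert a A)"
    proof
      show "span (g ` S) \<subseteq> Kset (insert a A)"
        using gK subspace_Kset by (intro span_minimal) auto
      show "Kset (insert a A) \<subseteq> span (g ` S)"
      proof
        fix x assume x: "x \<in> Kset (insert a A)"
        then have "x \<in> span S" using S(4) Kins by auto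
        then obtain c where c: "x = (\<Sum>t\<in>S. c t *\<^sub>R t)" using span_finite[OF S(1)] by auto
        have xa: "x \<bullet> a = 0" using x unfolding Kset_def by auto
        have "(\<Sum>t\<in>S. c t *\<^sub>R g t) = k *\<^sub>R (\<Sum>t\<in>S. c t *\<^sub>R t) - (\<Sum>t\<in>S. c t * (t \<bullet> a)) *\<^sub>R s0"
          unfolding g_def by (simp add: scaleR_sum_right scaleR_sum_left sum_subtractf algebra_simps)
        also have "(\<Sum>t\<in>S. c t * (t \<bullet> a)) = x \<bullet> a" unfolding c by (simp add: inner_sum_left)
        finally have "(\<Sum>t\<in>S. c t *\<^sub>R g t) = k *\<^sub>R x" using xa c by simp
        then have "x = (1 / k) *\<^sub>R (\<Sum>t\<in>S. c t *\<^sub>R g t)" using s0(2) unfolding k_def by simp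
        moreover have "(\<Sum>t\<in>S. c t *\<^sub>R g t) \<in> span (g ` S)"
          by (intro span_sum span_scale span_base) auto
        ultimately show "x \<in> span (g ` S)" by (simp add: span_scale)
      qed
    qed
    then show ?thesis using S(1) gl gK by (intro exI[of _ "g ` S"]) auto
  qed
qed

lemma span_latt_K:
  fixes A :: "(real^'n) set"
  assumes "finite A" "A \<subseteq> latt"
  shows "span (latt \<inter> Kset A) = Kset A"
proof -
  obtain S where S: "finite S" "S \<subseteq> latt" "S \<subseteq> Kset A" "span S = Kset A" using RAT[OF assms] by blast
  have "span (latt \<inter> Kset A) \<subseteq> Kset A" using subspace_Kset by (intro span_minimal) auto
  moreover have "Kset A \<subseteq> span (latt \<inter> Kset A)" using S by (metis le_inf_iff span_mono)
  ultimately show ?thesis by blast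
qed

lemma dim_Kset:
  fixes A :: "(real^'n) set"
  shows "dim (Kset A) + dim A = CARD('n)"
proof -
  have "dim {y \<in> UNIV. \<forall>x\<in>span A. orthogonal x y} + dim (span A) = dim (UNIV :: (real^'n) set)"
    by (rule dim_subspace_orthogonal_to_vectors) auto
  moreover have "{y \<in> UNIV. \<forall>x\<in>span A. orthogonal x y} = Kset A"
  proof
    show "{y \<in> UNIV. \<forall>x\<in>span A. orthogonal x y} \<subseteq> Kset A"
      unfolding Kset_def orthogonal_def by (auto intro: span_base simp: inner_commute)
    show "Kset A \<subseteq> {y \<in> UNIV. \<forall>x\<in>span A. orthogonal x y}"
    proof (safe)
      fix y x assume y: "y \<in> Kset A" and x: "x \<in> span A"
      have "orthogonal y x" using x
        by (rule orthogonal_to_span) (use y in \<open>auto simp: Kset_def orthogonal_def\<close>)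
      then show "orthogonal x y" by (simp add: orthogonal_commute)
    qed simp
  qed
  ultimately show ?thesis by simp
qed




lemma pmap_invol: assumes "\<And>p. f (f p) = p" shows "pmap f (pmap f P) = P"
proof -
  have "pmap f (pmap f P) = (\<lambda>(p, q). (f p, f q)) ` (\<lambda>(p, q). (f p, f q)) ` P" unfolding pmap_def ..
  also have "\<dots> = (\<lambda>z. z) ` P" unfolding image_image by (rule image_cong) (auto simp: assms)
  finally show ?thesis by simp
qed

theorem mainTheorem15:
  fixes Q :: "real^'n^'n" and e :: "'n \<Rightarrow> nat"
    and N :: "(real^'n) set" and r :: nat and v vs :: "real^'n"
  assumes K3: "bij_betw e UNIV {0..<22}" "\<And>i j. Q $ i $ j = of_int (K3gram (e i) (e j))"
    and N: "sublattice N" "lattice_signature Q N 1 r"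
    and U': "v \<in> orth_latt Q N" "vs \<in> orth_latt Q N"
            "bf Q v v = 0" "bf Q vs vs = 0" "bf Q v vs = 1"
  defines "\<Gamma>' \<equiv> {x \<in> latt. bf Q x v = 0 \<and> bf Q x vs = 0}"
  defines "Nv \<equiv> orth_latt Q N \<inter> \<Gamma>'"
  defines "V \<equiv> span N"
  defines "Vv \<equiv> span Nv"
  shows "sublattice Nv \<and> lattice_signature Q Nv 1 (18 - r)
     \<and> orth_latt Q N = {y + of_int a *\<^sub>R v + of_int b *\<^sub>R vs | y a b. y \<in> Nv}
     \<and> span \<Gamma>' = {x + y | x y. x \<in> V \<and> y \<in> Vv} \<and> V \<inter> Vv = {0}
     \<and> xi_tilde Q v vs ` (gamma_map Q ` Tbar Q V) = gamma_map Q ` Tbar Q Vv"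
proof -
  note bij = K3(1) and Qd = K3(2)
  have sym: "\<And>x y. bf Q x y = bf Q y x" using K_sym[OF bij Qd] .
  have Qint: "\<And>i j. Q $ i $ j \<in> \<int>" using Qd by simp
  have vsv: "bf Q vs v = 1" using U'(5) sym by metis
  have vl: "v \<in> latt" "vs \<in> latt" using U'(1,2) unfolding orth_latt_def by auto
  have vN: "\<And>y. y \<in> N \<Longrightarrow> bf Q v y = 0 \<and> bf Q vs y = 0" using U'(1,2) unfolding orth_latt_def by auto
  have Nl: "N \<subseteq> latt" using N(1) unfolding sublattice_def by auto
  have sigV: "has_signature Q V 1 r" using N(2) unfolding lattice_signature_def V_def .
  have sV: "subspace V" unfolding V_def by simp
  have dV: "dim V = 1 + r" using sigV unfolding has_signature_def by auto
  have VvA: "bf Q a v = 0 \<and> bf Q a vs = 0" if a: "a \<in> V" for a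
  proof -
    have "N \<subseteq> {y. bf Q v y = 0}" using vN by auto
    then have "span N \<subseteq> {y. bf Q v y = 0}" using subspace_bf_kernel by (rule span_minimal)
    moreover have "N \<subseteq> {y. bf Q vs y = 0}" using vN by auto
    then have "span N \<subseteq> {y. bf Q vs y = 0}" using subspace_bf_kernel by (rule span_minimal)
    ultimately show ?thesis using a sym unfolding V_def by (metis (mono_tags, lifting) mem_Collect_eq subsetD)
  qed
  obtain Bn where Bn: "Bn \<subseteq> N" "independent Bn" "N \<subseteq> span Bn" "card Bn = dim N"
    using basis_exists[of N] by blast
  have fBn: "finite Bn" using Bn(2) by (rule finiteI_independent)
  have spanBn: "span Bn = V"
  proof
    show "span Bn \<subseteq> V" unfolding V_def using Bn(1) by (rule span_mono)
    show "V \<subseteq> span Bn" unfolding V_def using Bn(3) by (simp add: span_minimal)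
  qed
  define A2 where "A2 = {Q *v v, Q *v vs}"
  define AN where "AN = (\<lambda>y. Q *v y) ` (Bn \<union> {v, vs})"
  have G': "\<Gamma>' = latt \<inter> Kset A2" unfolding \<Gamma>'_def A2_def Kset_def bf_def by auto
  have Nv': "Nv = latt \<inter> Kset AN"
  proof -
    have "x \<in> orth_latt Q N \<inter> \<Gamma>' \<longleftrightarrow> x \<in> latt \<inter> Kset AN" for x
    proof -
      have "(\<forall>y\<in>N. bf Q x y = 0) \<longleftrightarrow> (\<forall>y\<in>Bn. bf Q x y = 0)"
      proof
        assume "\<forall>y\<in>N. bf Q x y = 0" then show "\<forall>y\<in>Bn. bf Q x y = 0" using Bn(1) by auto
      next
        assume "\<forall>y\<in>Bn. bf Q x y = 0"
        then have "Bn \<subseteq> {y. bf Q x y = 0}" by auto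
        then have "span Bn \<subseteq> {y. bf Q x y = 0}" using subspace_bf_kernel by (rule span_minimal)
        then show "\<forall>y\<in>N. bf Q x y = 0" using Bn(3) by auto
      qed
      then show ?thesis unfolding orth_latt_def \<Gamma>'_def Kset_def AN_def bf_def by auto
    qed
    then show ?thesis unfolding Nv_def by auto
  qed
  have A2l: "finite A2" "A2 \<subseteq> latt" using latt_Qv[OF Qint] vl unfolding A2_def by auto
  have ANl: "finite AN" "AN \<subseteq> latt" using latt_Qv[OF Qint] vl Bn(1) Nl fBn unfolding AN_def by auto
  have spanG: "span \<Gamma>' = Kset A2" unfolding G' by (rule span_latt_K[OF A2l])
  have VvK: "Vv = Kset AN" unfolding Vv_def Nv' by (rule span_latt_K[OF ANl])
  have linQ: "linear (\<lambda>x. Q *v x)" by simp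
  have injQ: "inj_on (\<lambda>x. Q *v x) S" for S
  proof (rule inj_onI)
    fix x y assume "Q *v x = Q *v y"
    then have "Q *v (x - y) = 0" by (simp add: matrix_vector_mult_diff_distrib)
    then have "x - y = 0" by (rule K_inj[OF bij Qd])
    then show "x = y" by simp
  qed
  have "v \<noteq> vs" using U'(3,5) by auto
  have "vs \<noteq> 0" using U'(5) by (auto simp: bf_simps)
  have "v \<notin> span {vs}"
  proof
    assume "v \<in> span {vs}"
    then obtain k where "v = k *\<^sub>R vs" unfolding span1 by blast
    then show False using U'(4,5) by (simp add: bf_simps)
  qed
  then have indH: "independent {v, vs}" using \<open>vs \<noteq> 0\<close> by (simp add: independent_insert)
  have dH: "dim {v, vs} = 2" using dim_eq_card_independent[OF indH] \<open>v \<noteq> vs\<close> by simp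
  have dA2: "dim A2 = 2" unfolding A2_def using dim_image_eq[OF linQ injQ, of "{v, vs}"] dH by simp
  have card22: "CARD('n) = 22" by (rule card22[OF bij])
  have dG: "dim (span \<Gamma>') = 20" unfolding spanG using dim_Kset[of A2] dA2 card22 by simp
  have VH0: "span Bn \<inter> span {v, vs} \<subseteq> {0}"
  proof
    fix x assume x: "x \<in> span Bn \<inter> span {v, vs}"
    then have "x \<in> span {v, vs}" by blast
    then obtain s t where st: "x = s *\<^sub>R v + t *\<^sub>R vs" unfolding span2 by blast
    have "x \<in> V" using x spanBn by auto
    then have "bf Q x v = 0" "bf Q x vs = 0" using VvA by auto
    then have "t = 0" "s = 0" unfolding st using U'(3,4,5) vsv by (simp_all add: bf_simps)
    then show "x \<in> {0}" unfolding st by simp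
  qed
  then have "dim (span Bn \<inter> span {v, vs}) \<le> dim {0::real^'n}" by (rule dim_subset)
  then have dI: "dim (span Bn \<inter> span {v, vs}) = 0" by simp
  have dBH: "dim (Bn \<union> {v, vs}) = 3 + r"
  proof -
    have "dim (Bn \<union> {v, vs}) = dim (span (Bn \<union> {v, vs}))" by simp
    also have "\<dots> = dim {x + y | x y. x \<in> span Bn \<and> y \<in> span {v, vs}}" unfolding span_Un ..
    also have "\<dots> = dim (span Bn) + dim (span {v, vs})"
      using dim_sums_Int[OF subspace_span subspace_span, of Bn "{v, vs}"] dI by simp
    also have "\<dots> = 3 + r" using spanBn dV dH by simp
    finally show ?thesis .
  qed
  have dAN: "dim AN = 3 + r" unfolding AN_def using dim_image_eq[OF linQ injQ, of "Bn \<union> {v, vs}"] dBH by simp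
  have dVv: "dim Vv + 3 + r = 22" unfolding VvK using dim_Kset[of AN] dAN card22 by simp
  have sVv: "subspace Vv" unfolding Vv_def by simp
  have VvBv: "bf Q b v = 0 \<and> bf Q b vs = 0" if b: "b \<in> Vv" for b
    using b unfolding VvK Kset_def AN_def by (auto simp: bf_def)
  have VVv: "bf Q a b = 0" if a: "a \<in> V" and b: "b \<in> Vv" for a b
  proof -
    have "\<forall>y\<in>Bn. bf Q b y = 0" using b unfolding VvK Kset_def AN_def by (auto simp: bf_def)
    then have "Bn \<subseteq> {y. bf Q b y = 0}" by auto
    then have "span Bn \<subseteq> {y. bf Q b y = 0}" using subspace_bf_kernel by (rule span_minimal)
    then show ?thesis using a spanBn sym by (metis (mono_tags, lifting) mem_Collect_eq subsetD)
  qed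
  have capV: "V \<inter> Vv = {0}"
  proof
    show "V \<inter> Vv \<subseteq> {0}"
    proof
      fix x assume x: "x \<in> V \<inter> Vv"
      have xVv: "x \<in> Vv" and xV: "x \<in> V" using x by auto
      have "bf Q x y = 0" if y: "y \<in> V" for y using VVv[OF y xVv] sym[of x y] by simp
      then have "x = 0" using sig_ND[OF sym sigV xV] by blast
      then show "x \<in> {0}" by simp
    qed
    show "{0} \<subseteq> V \<inter> Vv" using sV sVv by (simp add: subspace_0)
  qed
  have sK2: "subspace (Kset A2)" by (rule subspace_Kset)
  have VK2: "V \<subseteq> Kset A2" using VvA unfolding Kset_def A2_def by (auto simp: bf_def)
  have VvK2: "Vv \<subseteq> Kset A2" using VvBv unfolding Kset_def A2_def by (auto simp: bf_def)
  have sumV: "span \<Gamma>' = {x + y | x y. x \<in> V \<and> y \<in> Vv}"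
  proof -
    have sub: "{x + y | x y. x \<in> V \<and> y \<in> Vv} \<subseteq> span \<Gamma>'"
      unfolding spanG using VK2 VvK2 sK2 subspace_add by blast
    have d0: "dim (V \<inter> Vv) = 0" using capV by simp
    have "dim {x + y | x y. x \<in> V \<and> y \<in> Vv} = 20"
      using dim_sums_Int[OF sV sVv] dV dVv d0 by linarith
    then show ?thesis using subspace_dim_equal[OF subspace_sums[OF sV sVv] subspace_span sub] dG by simp
  qed
  have dec: "z - bf Q z vs *\<^sub>R v - bf Q z v *\<^sub>R vs \<in> span \<Gamma>'" for z
    unfolding spanG Kset_def A2_def using U'(3,4,5) vsv by (auto simp: bf_simps bf_def[symmetric])
  have decomp: "\<exists>a b. a \<in> V \<and> b \<in> Vv \<and> z = a + b + bf Q z vs *\<^sub>R v + bf Q z v *\<^sub>R vs" for z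
  proof -
    obtain a b where "a \<in> V" "b \<in> Vv" "z - bf Q z vs *\<^sub>R v - bf Q z v *\<^sub>R vs = a + b"
      using dec[of z] unfolding sumV by blast
    then show ?thesis by (intro exI[of _ a] exI[of _ b]) (auto simp: algebra_simps)
  qed
  have radVv: "x = 0" if x: "x \<in> Vv" and rad: "\<And>y. y \<in> Vv \<Longrightarrow> bf Q x y = 0" for x
  proof -
    have all: "bf Q x z = 0" for z
    proof -
      obtain a b c d where ab: "a \<in> V" "b \<in> Vv" "z = a + b + c *\<^sub>R v + d *\<^sub>R vs"
        using decomp[of z] by blast
      have "bf Q x a = 0" using VVv[OF ab(1) x] sym by metis
      moreover have "bf Q x b = 0" using rad ab(2) by blast
      moreover have "bf Q x v = 0" "bf Q x vs = 0" using VvBv x by auto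
      ultimately show ?thesis unfolding ab(3) by (simp add: bf_simps)
    qed
    have "(Q *v x) \<bullet> (Q *v x) = 0" using all[of "Q *v x"] sym unfolding bf_def by metis
    then have "Q *v x = 0" by simp
    then show "x = 0" by (rule K_inj[OF bij Qd])
  qed
  obtain S T R where SRT: "posdef_sub Q S" "negdef_sub Q T" "S \<subseteq> Vv" "T \<subseteq> Vv" "subspace R" "R \<subseteq> Vv"
      "\<forall>r\<in>R. \<forall>y\<in>Vv. bf Q r y = 0" "dim Vv \<le> dim S + dim T + dim R"
    using diag[OF sym sVv] by blast
  have "R \<subseteq> {0}" using SRT(6,7) radVv by blast
  then have "dim R \<le> dim {0::real^'n}" by (rule dim_subset)
  then have dR: "dim R = 0" by simp
  obtain SV TV where SV: "posdef_sub Q SV" "SV \<subseteq> V" "dim SV = 1" and TV: "negdef_sub Q TV" "TV \<subseteq> V" "dim TV = r"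
    using sigV unfolding has_signature_def by blast
  have pp: "bf Q (v + vs) (v + vs) > 0" using U'(3,4,5) vsv by (simp add: bf_simps)
  have nn: "bf Q (v - vs) (v - vs) < 0" using U'(3,4,5) vsv by (simp add: bf_simps)
  have orthH: "bf Q (a + b) (c *\<^sub>R (v + s *\<^sub>R vs)) = 0" if "a \<in> Vv" "b \<in> V" for a b c s
    using VvBv[OF that(1)] VvA[OF that(2)] by (simp add: bf_simps)
  have dS: "dim S \<le> 1"
  proof -
    have P1: "posdef_sub Q {a + b |a b. a \<in> S \<and> b \<in> SV} \<and> dim {a + b |a b. a \<in> S \<and> b \<in> SV} = dim S + dim SV"
      by (rule possum[OF sym SRT(1) SV(1)]) (use SRT(3) SV(2) VVv sym in \<open>metis subsetD\<close>)
    have P2: "posdef_sub Q {a + b |a b. a \<in> {a + b |a b. a \<in> S \<and> b \<in> SV} \<and> b \<in> span {v + vs}}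
       \<and> dim {a + b |a b. a \<in> {a + b |a b. a \<in> S \<and> b \<in> SV} \<and> b \<in> span {v + vs}} = dim {a + b |a b. a \<in> S \<and> b \<in> SV} + dim (span {v + vs})"
    proof (rule possum[OF sym conjunct1[OF P1] conjunct1[OF pos_line[OF pp]]])
      fix x y assume hx: "x \<in> {a + b |a b. a \<in> S \<and> b \<in> SV}" and hy: "y \<in> span {v + vs}"
      from hx obtain a b where ab: "x = a + b" "a \<in> S" "b \<in> SV" by blast
      from hy obtain c where c: "y = c *\<^sub>R (v + vs)" unfolding span1 by blast
      have "a \<in> Vv" "b \<in> V" using ab SRT(3) SV(2) by auto
      from orthH[OF this, of c "1"] show "bf Q x y = 0" unfolding ab c by (simp add: algebra_simps)
    qed
    then show ?thesis using K_posbound[OF bij Qd, of "{a + b |a b. a \<in> {a + b |a b. a \<in> S \<and> b \<in> SV} \<and> b \<in> span {v + vs}}"]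
      P1 pos_line[OF pp] SV(3) by simp
  qed
  have dT: "dim T + r \<le> 18"
  proof -
    have P1: "negdef_sub Q {a + b |a b. a \<in> T \<and> b \<in> TV} \<and> dim {a + b |a b. a \<in> T \<and> b \<in> TV} = dim T + dim TV"
      by (rule negsum[OF sym SRT(2) TV(1)]) (use SRT(4) TV(2) VVv sym in \<open>metis subsetD\<close>)
    have P2: "negdef_sub Q {a + b |a b. a \<in> {a + b |a b. a \<in> T \<and> b \<in> TV} \<and> b \<in> span {v - vs}}
       \<and> dim {a + b |a b. a \<in> {a + b |a b. a \<in> T \<and> b \<in> TV} \<and> b \<in> span {v - vs}} = dim {a + b |a b. a \<in> T \<and> b \<in> TV} + dim (span {v - vs})"
    proof (rule negsum[OF sym conjunct1[OF P1] conjunct1[OF neg_line[OF nn]]])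
      fix x y assume hx: "x \<in> {a + b |a b. a \<in> T \<and> b \<in> TV}" and hy: "y \<in> span {v - vs}"
      from hx obtain a b where ab: "x = a + b" "a \<in> T" "b \<in> TV" by blast
      from hy obtain c where c: "y = c *\<^sub>R (v - vs)" unfolding span1 by blast
      have "a \<in> Vv" "b \<in> V" using ab SRT(4) TV(2) by auto
      from orthH[OF this, of c "(-1)"] show "bf Q x y = 0" unfolding ab c by (simp add: algebra_simps)
    qed
    then show ?thesis using K_negbound[OF bij Qd, of "{a + b |a b. a \<in> {a + b |a b. a \<in> T \<and> b \<in> TV} \<and> b \<in> span {v - vs}}"]
      P1 neg_line[OF nn] TV(3) by simp
  qed
  have dST: "dim S = 1" "dim T = 18 - r" "r \<le> 18" using dS dT SRT(8) dR dVv by linarith+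
  have sigVv: "has_signature Q Vv 1 (18 - r)"
    unfolding has_signature_def using sVv dVv dST SRT(1-4) by auto
  have c1: "sublattice Nv"
    unfolding sublattice_def Nv_def \<Gamma>'_def orth_latt_def
    by (simp add: latt_add latt_diff latt_zero bf_simps) blast
  have c2: "lattice_signature Q Nv 1 (18 - r)"
    unfolding lattice_signature_def Vv_def[symmetric] by (rule sigVv)
  have c3: "orth_latt Q N = {y + of_int a *\<^sub>R v + of_int b *\<^sub>R vs | y a b. y \<in> Nv}"
  proof
    show "orth_latt Q N \<subseteq> {y + of_int a *\<^sub>R v + of_int b *\<^sub>R vs | y a b. y \<in> Nv}"
    proof
      fix x assume x: "x \<in> orth_latt Q N"
      then have xl: "x \<in> latt" and xN: "\<And>n. n \<in> N \<Longrightarrow> bf Q x n = 0" unfolding orth_latt_def by auto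
      obtain a where a: "bf Q x vs = of_int a" using latt_bf[OF Qint xl vl(2)] Ints_cases by metis
      obtain b where b: "bf Q x v = of_int b" using latt_bf[OF Qint xl vl(1)] Ints_cases by metis
      define y where "y = x - of_int a *\<^sub>R v - of_int b *\<^sub>R vs"
      have "y \<in> latt" unfolding y_def using xl vl by (intro latt_diff latt_scale) auto
      moreover have "bf Q y n = 0" if "n \<in> N" for n
        using xN[OF that] vN[OF that] unfolding y_def by (simp add: bf_simps)
      moreover have "bf Q y v = 0" "bf Q y vs = 0"
        unfolding y_def using a b U'(3,4,5) vsv by (simp_all add: bf_simps)
      ultimately have "y \<in> Nv" unfolding Nv_def orth_latt_def \<Gamma>'_def by auto
      moreover have "x = y + of_int a *\<^sub>R v + of_int b *\<^sub>R vs" unfolding y_def by simp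
      ultimately show "x \<in> {y + of_int a *\<^sub>R v + of_int b *\<^sub>R vs | y a b. y \<in> Nv}" by blast
    qed
    show "{y + of_int a *\<^sub>R v + of_int b *\<^sub>R vs | y a b. y \<in> Nv} \<subseteq> orth_latt Q N"
    proof
      fix x assume "x \<in> {y + of_int a *\<^sub>R v + of_int b *\<^sub>R vs | y a b. y \<in> Nv}"
      then obtain y a b where x: "x = y + of_int a *\<^sub>R v + of_int b *\<^sub>R vs" "y \<in> Nv" by blast
      then have yl: "y \<in> latt" and yN: "\<And>n. n \<in> N \<Longrightarrow> bf Q y n = 0"
        unfolding Nv_def orth_latt_def by auto
      have "x \<in> latt" unfolding x(1) using yl vl by (intro latt_add latt_scale) auto
      moreover have "bf Q x n = 0" if "n \<in> N" for n
        using yN[OF that] vN[OF that] unfolding x(1) by (simp add: bf_simps)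
      ultimately show "x \<in> orth_latt Q N" unfolding orth_latt_def by auto
    qed
  qed
  have orthA1: "x - bf Q x vs *\<^sub>R v - bf Q x v *\<^sub>R vs \<in> Vv" if x: "x \<in> orth_real Q V" for x
  proof -
    obtain a b where ab: "a \<in> V" "b \<in> Vv" "x - bf Q x vs *\<^sub>R v - bf Q x v *\<^sub>R vs = a + b"
      using dec[of x] unfolding sumV by blast
    have "bf Q a y = 0" if y: "y \<in> V" for y
    proof -
      have "bf Q x y = 0" using x y unfolding orth_real_def by auto
      moreover have "bf Q v y = 0" "bf Q vs y = 0" using VvA[OF y] sym by metis+
      moreover have "bf Q b y = 0" using VVv[OF y ab(2)] sym by metis
      moreover have "a = (x - bf Q x vs *\<^sub>R v - bf Q x v *\<^sub>R vs) - b" using ab(3) by simp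
      ultimately show ?thesis by (simp add: bf_simps)
    qed
    then have "a = 0" using sig_ND[OF sym sigV ab(1)] by blast
    then show ?thesis using ab by simp
  qed
  have orthA2: "x - bf Q x vs *\<^sub>R v - bf Q x v *\<^sub>R vs \<in> V" if x: "x \<in> orth_real Q Vv" for x
  proof -
    obtain a b where ab: "a \<in> V" "b \<in> Vv" "x - bf Q x vs *\<^sub>R v - bf Q x v *\<^sub>R vs = a + b"
      using dec[of x] unfolding sumV by blast
    have "bf Q b y = 0" if y: "y \<in> Vv" for y
    proof -
      have "bf Q x y = 0" using x y unfolding orth_real_def by auto
      moreover have "bf Q v y = 0" "bf Q vs y = 0" using VvBv[OF y] sym by metis+
      moreover have "bf Q a y = 0" using VVv[OF ab(1) y] by metis
      moreover have "b = (x - bf Q x vs *\<^sub>R v - bf Q x v *\<^sub>R vs) - a" using ab(3) by simp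
      ultimately show ?thesis by (simp add: bf_simps)
    qed
    then have "b = 0" using sig_ND[OF sym sigVv ab(2)] by blast
    then show ?thesis using ab by simp
  qed
  have VvV: "bf Q a b = 0" if ha: "a \<in> Vv" and hb: "b \<in> V" for a b
    using VVv[OF hb ha] sym[of a b] by simp
  have incl1: "xi_tilde Q v vs ` (gamma_map Q ` Tbar Q V) \<subseteq> gamma_map Q ` Tbar Q Vv"
    by (rule mirror_incl[OF sym U'(3,4,5) sV sVv VvA VvBv VVv orthA1 noPos2[OF sym sigVv]])
  have incl2: "xi_tilde Q v vs ` (gamma_map Q ` Tbar Q Vv) \<subseteq> gamma_map Q ` Tbar Q V"
    by (rule mirror_incl[OF sym U'(3,4,5) sVv sV VvBv VvA VvV orthA2 noPos2[OF sym sigV]])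
  have inv: "xi_tilde Q v vs (xi_tilde Q v vs z) = z" for z
  proof -
    have xx: "\<And>p. xi Q v vs (xi Q v vs p) = p" using xi_invol[OF U'(3,4,5) vsv] .
    obtain H1 H2 where "z = (H1, H2)" by (cases z)
    then show ?thesis unfolding xi_tilde_def by (simp add: pmap_invol[OF xx])
  qed
  have c6: "xi_tilde Q v vs ` (gamma_map Q ` Tbar Q V) = gamma_map Q ` Tbar Q Vv"
  proof
    show "xi_tilde Q v vs ` (gamma_map Q ` Tbar Q V) \<subseteq> gamma_map Q ` Tbar Q Vv" by (rule incl1)
    show "gamma_map Q ` Tbar Q Vv \<subseteq> xi_tilde Q v vs ` (gamma_map Q ` Tbar Q V)"
    proof
      fix z assume "z \<in> gamma_map Q ` Tbar Q Vv"
      then have "xi_tilde Q v vs z \<in> gamma_map Q ` Tbar Q V" using incl2 by blast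
      then show "z \<in> xi_tilde Q v vs ` (gamma_map Q ` Tbar Q V)" using inv[of z] by (metis image_eqI)
    qed
  qed
  show ?thesis by (intro conjI c1 c2 c3 sumV capV c6)
qed


end
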